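(* Let $l,u,\hbar$ satisfy the standing assumptions below and let $\overline{Y}\in C^1_G(0,T)$ with $l_T\le\hat{\mathbb{E}}[\hbar(T,\overline{Y}_T)]\le u_T$. Then there exists a unique solution $(Y,R)\in C^1_G(0,T)\times C^T_B$ to the backward Skorokhod problem with sublinear expectation associated to $\overline{Y},\hbar$ and barriers $l,u$. Moreover, for $t\in[0,T]$, $$R_T-R_t=-\max\Big\{(\hat{\mathbb{E}}[\overline{Y}_T]-U_T(\overline{Y}_T))^+\wedge\inf_{t\le v\le T}(\hat{\mathbb{E}}[\overline{Y}_v]-L_v(\overline{Y}_v)),\ \sup_{t\le s\le T}\Big[(\hat{\mathbb{E}}[\overline{Y}_s]-U_s(\overline{Y}_s))\wedge\inf_{t\le v\le s}(\hat{\mathbb{E}}[\overline{Y}_v]-L_v(\overline{Y}_v))\Big]\Big\}.$$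
   Context: Setting: $\Omega_T=\{\omega\in C([0,T];\mathbb{R}^d):\omega_0=0\}$, $B$ the canonical process, $\hat{\mathbb{E}}$ the (sublinear) $G$-expectation for a monotone sublinear non-degenerate $G$; $L^1_G(\Omega_t)$ is the completion of bounded Lipschitz cylinder functionals of $B$ up to time $t$ under $\hat{\mathbb{E}}|\cdot|$. $C^1_G(0,T)$ is the set of processes $Y$ with $Y_v\in L^1_G(\Omega_v)$ for all $v$ and $v\mapsto Y_v$ continuous for the norm $\hat{\mathbb{E}}|\cdot|$; $C^T_B$ is the set of deterministic continuous functions $R:[0,T]\to\mathbb{R}$ of bounded variation with $R_0=0$. Standing assumptions: $l,u:[0,T]\to\mathbb{R}$ bounded continuous, $\inf_t(u_t-l_t)>0$; $\hbar:[0,T]\times\Omega_T\times\mathbb{R}\to\mathbb{R}$ with $(t,y)\mapsto\hbar(t,y)$ uniformly continuous uniformly in $\omega$, $y\mapsto\hbar(t,y)$ strictly increasing, $\hbar(t,y)\in L^1_G(\Omega_T)$ and $\hat{\mathbb{E}}[\lim_{y\downarrow-\infty}\hbar(t,y)]<\inf_sl_s<\sup_su_s<\hat{\mathbb{E}}[\lim_{y\uparrow\infty}\hbar(t,y)]$, $|\hbar(t,y)|\le C_\hbar(1+|y|)$, and $\underline{c}|y-y'|\le|\hbar(t,y)-\hbar(t,y')|\le\overline{c}|y-y'|$ for constants $C_\hbar>0$, $0<\underline{c}\le\overline{c}$. For $X\in L^1_G(\Omega_t)$ set $\overline{H}(t,x,X)=\hat{\mathbb{E}}[\hbar(t,x+X-\hat{\mathbb{E}}[X])]$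 ($x\in\mathbb{R}$; continuous, strictly increasing, onto $\mathbb{R}$ in $x$), $L_t(X)=\overline{H}^{-1}(t,\cdot,X)(l_t)$ and $U_t(X)=\overline{H}^{-1}(t,\cdot,X)(u_t)$. A pair $(Y,R)\in C^1_G(0,T)\times C^T_B$ solves the backward Skorokhod problem with sublinear expectation associated to $\overline{Y},\hbar,l,u$ if (i) $Y_t=\overline{Y}_t+R_T-R_t$ for $t\in[0,T]$; (ii) $l_t\le\hat{\mathbb{E}}[\hbar(t,Y_t)]\le u_t$ for all $t$; (iii) $R$ is deterministic, of bounded variation, $R_0=0$, and $\int_s^t(\hat{\mathbb{E}}[\hbar(v,Y_v)]-l_v)dR_v\le0$, $\int_s^t(\hat{\mathbb{E}}[\hbar(v,Y_v)]-u_v)dR_v\le0$ for all $0\le s\le t\le T$. *)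

theory Defs
  imports "HOL-Analysis.Analysis"
begin

definition sublinear_expectation :: "('w \<Rightarrow> real) set \<Rightarrow> (('w \<Rightarrow> real) \<Rightarrow> real) \<Rightarrow> bool" where
  "sublinear_expectation H E \<longleftrightarrow>
     (\<forall>c. (\<lambda>_. c) \<in> H) \<and>
     (\<forall>X\<in>H. \<forall>Y\<in>H. (\<lambda>w. X w + Y w) \<in> H) \<and>
     (\<forall>X\<in>H. \<forall>a. (\<lambda>w. a * X w) \<in> H) \<and>
     (\<forall>X\<in>H. (\<lambda>w. \<bar>X w\<bar>) \<in> H) \<and>
     (\<forall>X\<in>H. \<forall>Y\<in>H. (\<forall>w. X w \<le> Y w) \<longrightarrow> E X \<le> E Y) \<and>
     (\<forall>c. E (\<lambda>_. c) = c) \<and>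
     (\<forall>X\<in>H. \<forall>Y\<in>H. E (\<lambda>w. X w + Y w) \<le> E X + E Y) \<and>
     (\<forall>X\<in>H. \<forall>a\<ge>0. E (\<lambda>w. a * X w) = a * E X)"

text \<open>Abstract version of the G-framework on [0,T]: LG t plays the role of L^1_G(Omega_t),
  increasing in t, each a sublinear expectation space for E; LG T is closed under
  composition with random functions that are Lipschitz in the real argument.\<close>
definition G_framework :: "real \<Rightarrow> (real \<Rightarrow> ('w \<Rightarrow> real) set) \<Rightarrow> (('w \<Rightarrow> real) \<Rightarrow> real) \<Rightarrow> bool" where
  "G_framework T LG E \<longleftrightarrow>
     (\<forall>t\<in>{0..T}. sublinear_expectation (LG t) E) \<and>
     (\<forall>s t. 0 \<le> s \<and> s \<le> t \<and> t \<le> T \<longrightarrow> LG s \<subseteq> LG t) \<and>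
     (\<forall>X\<in>LG T. \<forall>f :: 'w \<Rightarrow> real \<Rightarrow> real.
        (\<forall>y. (\<lambda>w. f w y) \<in> LG T) \<and> (\<exists>c. \<forall>w y y'. \<bar>f w y - f w y'\<bar> \<le> c * \<bar>y - y'\<bar>)
        \<longrightarrow> (\<lambda>w. f w (X w)) \<in> LG T)"

definition C1G :: "real \<Rightarrow> (real \<Rightarrow> ('w \<Rightarrow> real) set) \<Rightarrow> (('w \<Rightarrow> real) \<Rightarrow> real) \<Rightarrow> (real \<Rightarrow> 'w \<Rightarrow> real) \<Rightarrow> bool" where
  "C1G T LG E Y \<longleftrightarrow>
     (\<forall>v\<in>{0..T}. Y v \<in> LG v) \<and>
     (\<forall>v\<in>{0..T}. \<forall>\<epsilon>>0. \<exists>\<delta>>0. \<forall>v'\<in>{0..T}. \<bar>v' - v\<bar> < \<delta> \<longrightarrow> E (\<lambda>w. \<bar>Y v' w - Y v w\<bar>) < \<epsilon>)"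

definition bounded_variation_on :: "(real \<Rightarrow> real) \<Rightarrow> real \<Rightarrow> real \<Rightarrow> bool" where
  "bounded_variation_on R a b \<longleftrightarrow>
     (\<exists>M. \<forall>xs. sorted xs \<and> set xs \<subseteq> {a..b} \<longrightarrow>
        (\<Sum>i<length xs - 1. \<bar>R (xs ! Suc i) - R (xs ! i)\<bar>) \<le> M)"

definition CTB :: "real \<Rightarrow> (real \<Rightarrow> real) \<Rightarrow> bool" where
  "CTB T R \<longleftrightarrow> continuous_on {0..T} R \<and> bounded_variation_on R 0 T \<and> R 0 = 0"

definition has_rs_integral :: "(real \<Rightarrow> real) \<Rightarrow> (real \<Rightarrow> real) \<Rightarrow> real \<Rightarrow> real \<Rightarrow> real \<Rightarrow> bool" where
  "has_rs_integral f R s t I \<longleftrightarrow>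
     (\<forall>\<epsilon>>0. \<exists>\<delta>>0. \<forall>xs \<xi>.
        xs \<noteq> [] \<and> sorted xs \<and> hd xs = s \<and> last xs = t \<and>
        (\<forall>i<length xs - 1. xs ! Suc i - xs ! i < \<delta> \<and> xs ! i \<le> \<xi> i \<and> \<xi> i \<le> xs ! Suc i)
        \<longrightarrow> \<bar>(\<Sum>i<length xs - 1. f (\<xi> i) * (R (xs ! Suc i) - R (xs ! i))) - I\<bar> < \<epsilon>)"

definition Hbar :: "(('w \<Rightarrow> real) \<Rightarrow> real) \<Rightarrow> (real \<Rightarrow> 'w \<Rightarrow> real \<Rightarrow> real) \<Rightarrow> real \<Rightarrow> real \<Rightarrow> ('w \<Rightarrow> real) \<Rightarrow> real" where
  "Hbar E hbar t x X = E (\<lambda>w. hbar t w (x + X w - E X))"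

definition Hinv :: "(('w \<Rightarrow> real) \<Rightarrow> real) \<Rightarrow> (real \<Rightarrow> 'w \<Rightarrow> real \<Rightarrow> real) \<Rightarrow> real \<Rightarrow> ('w \<Rightarrow> real) \<Rightarrow> real \<Rightarrow> real" where
  "Hinv E hbar t X c = (THE x. Hbar E hbar t x X = c)"

definition Lbar :: "(('w \<Rightarrow> real) \<Rightarrow> real) \<Rightarrow> (real \<Rightarrow> 'w \<Rightarrow> real \<Rightarrow> real) \<Rightarrow> (real \<Rightarrow> real) \<Rightarrow> real \<Rightarrow> ('w \<Rightarrow> real) \<Rightarrow> real" where
  "Lbar E hbar l t X = Hinv E hbar t X (l t)"

definition Ubar :: "(('w \<Rightarrow> real) \<Rightarrow> real) \<Rightarrow> (real \<Rightarrow> 'w \<Rightarrow> real \<Rightarrow> real) \<Rightarrow> (real \<Rightarrow> real) \<Rightarrow> real \<Rightarrow> ('w \<Rightarrow> real) \<Rightarrow> real" where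
  "Ubar E hbar u t X = Hinv E hbar t X (u t)"

definition BSP :: "real \<Rightarrow> (real \<Rightarrow> ('w \<Rightarrow> real) set) \<Rightarrow> (('w \<Rightarrow> real) \<Rightarrow> real) \<Rightarrow>
    (real \<Rightarrow> 'w \<Rightarrow> real \<Rightarrow> real) \<Rightarrow> (real \<Rightarrow> real) \<Rightarrow> (real \<Rightarrow> real) \<Rightarrow>
    (real \<Rightarrow> 'w \<Rightarrow> real) \<Rightarrow> (real \<Rightarrow> 'w \<Rightarrow> real) \<Rightarrow> (real \<Rightarrow> real) \<Rightarrow> bool" where
  "BSP T LG E hbar l u Ybar Y R \<longleftrightarrow>
     C1G T LG E Y \<and> CTB T R \<and>
     (\<forall>t\<in>{0..T}. \<forall>w. Y t w = Ybar t w + R T - R t) \<and>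
     (\<forall>t\<in>{0..T}. l t \<le> E (\<lambda>w. hbar t w (Y t w)) \<and> E (\<lambda>w. hbar t w (Y t w)) \<le> u t) \<and>
     (\<forall>s t. 0 \<le> s \<and> s \<le> t \<and> t \<le> T \<longrightarrow>
        (\<exists>I. has_rs_integral (\<lambda>v. E (\<lambda>w. hbar v w (Y v w)) - l v) R s t I \<and> I \<le> 0) \<and>
        (\<exists>I. has_rs_integral (\<lambda>v. E (\<lambda>w. hbar v w (Y v w)) - u v) R s t I \<and> I \<le> 0))"

end

theory Submission
  imports Defs "HOL-Analysis.Analysis"
begin


lemma part_in:
  assumes "xs \<noteq> []" "sorted xs" "hd xs = s" "last xs = t" "i < length xs"
  shows "s \<le> xs ! i \<and> xs ! i \<le> t"
proof -
  have "xs ! 0 \<le> xs ! i" using assms by (intro sorted_nth_mono) auto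
  moreover have "xs ! i \<le> xs ! (length xs - 1)" using assms by (intro sorted_nth_mono) auto
  ultimately show ?thesis using assms by (simp add: hd_conv_nth last_conv_nth)
qed

lemma rs_cong:
  assumes "\<forall>x\<in>{s..t}. f x = g x" "\<forall>x\<in>{s..t}. R x = R' x + c"
    and "has_rs_integral f R s t I"
  shows "has_rs_integral g R' s t I"
  unfolding has_rs_integral_def
proof (intro allI impI)
  fix \<epsilon> :: real assume "\<epsilon> > 0"
  then obtain \<delta> where d: "\<delta> > 0" and H: "\<forall>xs \<xi>.
        xs \<noteq> [] \<and> sorted xs \<and> hd xs = s \<and> last xs = t \<and>
        (\<forall>i<length xs - 1. xs ! Suc i - xs ! i < \<delta> \<and> xs ! i \<le> \<xi> i \<and> \<xi> i \<le> xs ! Suc i)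
        \<longrightarrow> \<bar>(\<Sum>i<length xs - 1. f (\<xi> i) * (R (xs ! Suc i) - R (xs ! i))) - I\<bar> < \<epsilon>"
    using assms(3) unfolding has_rs_integral_def by meson
  show "\<exists>\<delta>>0. \<forall>xs \<xi>.
        xs \<noteq> [] \<and> sorted xs \<and> hd xs = s \<and> last xs = t \<and>
        (\<forall>i<length xs - 1. xs ! Suc i - xs ! i < \<delta> \<and> xs ! i \<le> \<xi> i \<and> \<xi> i \<le> xs ! Suc i)
        \<longrightarrow> \<bar>(\<Sum>i<length xs - 1. g (\<xi> i) * (R' (xs ! Suc i) - R' (xs ! i))) - I\<bar> < \<epsilon>"
  proof (intro exI[of _ \<delta>] conjI allI impI d)
    fix xs \<xi> assume A: "xs \<noteq> [] \<and> sorted xs \<and> hd xs = s \<and> last xs = t \<and>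
        (\<forall>i<length xs - 1. xs ! Suc i - xs ! i < \<delta> \<and> xs ! i \<le> \<xi> i \<and> \<xi> i \<le> xs ! Suc i)"
    have "(\<Sum>i<length xs - 1. g (\<xi> i) * (R' (xs ! Suc i) - R' (xs ! i)))
        = (\<Sum>i<length xs - 1. f (\<xi> i) * (R (xs ! Suc i) - R (xs ! i)))"
    proof (rule sum.cong[OF refl])
      fix i assume "i \<in> {..<length xs - 1}"
      then have i: "i < length xs - 1" by simp
      have p1: "s \<le> xs ! i \<and> xs ! i \<le> t" using A i by (intro part_in) auto
      have p2: "s \<le> xs ! Suc i \<and> xs ! Suc i \<le> t" using A i by (intro part_in) auto
      have "\<xi> i \<in> {s..t}" using A i p1 p2 by force
      then show "g (\<xi> i) * (R' (xs ! Suc i) - R' (xs ! i)) = f (\<xi> i) * (R (xs ! Suc i) - R (xs ! i))"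
        using assms(1,2) p1 p2 by auto
    qed
    then show "\<bar>(\<Sum>i<length xs - 1. g (\<xi> i) * (R' (xs ! Suc i) - R' (xs ! i))) - I\<bar> < \<epsilon>"
      using H A by simp
  qed
qed

lemma rs_diff:
  assumes "has_rs_integral f A s t I1" "has_rs_integral f B s t I2"
  shows "has_rs_integral f (\<lambda>v. A v - B v) s t (I1 - I2)"
  unfolding has_rs_integral_def
proof (intro allI impI)
  fix \<epsilon> :: real assume e: "\<epsilon> > 0"
  obtain d1 where d1: "d1 > 0" and H1: "\<forall>xs \<xi>.
        xs \<noteq> [] \<and> sorted xs \<and> hd xs = s \<and> last xs = t \<and>
        (\<forall>i<length xs - 1. xs ! Suc i - xs ! i < d1 \<and> xs ! i \<le> \<xi> i \<and> \<xi> i \<le> xs ! Suc i)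
        \<longrightarrow> \<bar>(\<Sum>i<length xs - 1. f (\<xi> i) * (A (xs ! Suc i) - A (xs ! i))) - I1\<bar> < \<epsilon>/2"
    using assms(1)[unfolded has_rs_integral_def, rule_format, of "\<epsilon>/2"] e by auto
  obtain d2 where d2: "d2 > 0" and H2: "\<forall>xs \<xi>.
        xs \<noteq> [] \<and> sorted xs \<and> hd xs = s \<and> last xs = t \<and>
        (\<forall>i<length xs - 1. xs ! Suc i - xs ! i < d2 \<and> xs ! i \<le> \<xi> i \<and> \<xi> i \<le> xs ! Suc i)
        \<longrightarrow> \<bar>(\<Sum>i<length xs - 1. f (\<xi> i) * (B (xs ! Suc i) - B (xs ! i))) - I2\<bar> < \<epsilon>/2"
    using assms(2)[unfolded has_rs_integral_def, rule_format, of "\<epsilon>/2"] e by auto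
  show "\<exists>\<delta>>0. \<forall>xs \<xi>.
        xs \<noteq> [] \<and> sorted xs \<and> hd xs = s \<and> last xs = t \<and>
        (\<forall>i<length xs - 1. xs ! Suc i - xs ! i < \<delta> \<and> xs ! i \<le> \<xi> i \<and> \<xi> i \<le> xs ! Suc i)
        \<longrightarrow> \<bar>(\<Sum>i<length xs - 1. f (\<xi> i) * ((A (xs ! Suc i) - B (xs ! Suc i)) - (A (xs ! i) - B (xs ! i)))) - (I1 - I2)\<bar> < \<epsilon>"
  proof (intro exI[of _ "min d1 d2"] conjI allI impI)
    show "min d1 d2 > 0" using d1 d2 by simp
    fix xs \<xi> assume P: "xs \<noteq> [] \<and> sorted xs \<and> hd xs = s \<and> last xs = t \<and>
        (\<forall>i<length xs - 1. xs ! Suc i - xs ! i < min d1 d2 \<and> xs ! i \<le> \<xi> i \<and> \<xi> i \<le> xs ! Suc i)"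
    have P1: "\<forall>i<length xs - 1. xs ! Suc i - xs ! i < d1 \<and> xs ! i \<le> \<xi> i \<and> \<xi> i \<le> xs ! Suc i"
      using P by auto
    have P2: "\<forall>i<length xs - 1. xs ! Suc i - xs ! i < d2 \<and> xs ! i \<le> \<xi> i \<and> \<xi> i \<le> xs ! Suc i"
      using P by auto
    have a: "\<bar>(\<Sum>i<length xs - 1. f (\<xi> i) * (A (xs ! Suc i) - A (xs ! i))) - I1\<bar> < \<epsilon>/2"
      by (rule H1[rule_format]) (use P P1 in blast)
    have b: "\<bar>(\<Sum>i<length xs - 1. f (\<xi> i) * (B (xs ! Suc i) - B (xs ! i))) - I2\<bar> < \<epsilon>/2"
      by (rule H2[rule_format]) (use P P2 in blast)
    have eq: "(\<Sum>i<length xs - 1. f (\<xi> i) * ((A (xs ! Suc i) - B (xs ! Suc i)) - (A (xs ! i) - B (xs ! i))))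
      = (\<Sum>i<length xs - 1. f (\<xi> i) * (A (xs ! Suc i) - A (xs ! i))) - (\<Sum>i<length xs - 1. f (\<xi> i) * (B (xs ! Suc i) - B (xs ! i)))"
      unfolding sum_subtractf[symmetric] by (rule sum.cong) (simp_all add: algebra_simps)
    show "\<bar>(\<Sum>i<length xs - 1. f (\<xi> i) * ((A (xs ! Suc i) - B (xs ! Suc i)) - (A (xs ! i) - B (xs ! i)))) - (I1 - I2)\<bar> < \<epsilon>"
      unfolding eq using a b by linarith
  qed
qed

lemma rs_neg:
  assumes "has_rs_integral f R s t I"
  shows "has_rs_integral (\<lambda>v. - f v) (\<lambda>v. - R v) s t I"
  using assms unfolding has_rs_integral_def by (simp add: algebra_simps)

lemma rs_uniform:
  assumes "has_rs_integral f R s t I" "s \<le> t" "\<epsilon> > 0"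
  obtains \<delta> where "\<delta> > 0" "\<And>K \<xi>. K > 0 \<Longrightarrow> (t - s) / K < \<delta> \<Longrightarrow>
     (\<forall>i<K. s + i * ((t - s) / K) \<le> \<xi> i \<and> \<xi> i \<le> s + Suc i * ((t - s) / K)) \<Longrightarrow>
     \<bar>(\<Sum>i<K. f (\<xi> i) * (R (s + Suc i * ((t - s) / K)) - R (s + i * ((t - s) / K)))) - I\<bar> < \<epsilon>"
proof -
  obtain \<delta> where d: "\<delta> > 0" and H: "\<forall>xs \<xi>.
        xs \<noteq> [] \<and> sorted xs \<and> hd xs = s \<and> last xs = t \<and>
        (\<forall>i<length xs - 1. xs ! Suc i - xs ! i < \<delta> \<and> xs ! i \<le> \<xi> i \<and> \<xi> i \<le> xs ! Suc i)
        \<longrightarrow> \<bar>(\<Sum>i<length xs - 1. f (\<xi> i) * (R (xs ! Suc i) - R (xs ! i))) - I\<bar> < \<epsilon>"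
    using assms(1,3) unfolding has_rs_integral_def by meson
  show ?thesis
  proof (rule that[OF d])
    fix K :: nat and \<xi> :: "nat \<Rightarrow> real"
    assume K: "K > 0" "(t - s) / K < \<delta>"
      and xi: "\<forall>i<K. s + i * ((t - s) / K) \<le> \<xi> i \<and> \<xi> i \<le> s + Suc i * ((t - s) / K)"
    define h where "h = (t - s) / K"
    have h0: "h \<ge> 0" using assms(2) K unfolding h_def by simp
    define xs where "xs = map (\<lambda>i. s + real i * h) [0..<Suc K]"
    have len: "length xs = Suc K" unfolding xs_def by simp
    have nth: "\<And>i. i < Suc K \<Longrightarrow> xs ! i = s + real i * h" unfolding xs_def
      by (simp del: upt_Suc)
    have ne: "xs \<noteq> []" using len by auto
    have sorted: "sorted xs" unfolding sorted_iff_nth_mono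
      using nth len h0 by (simp add: mult_right_mono)
    have hd: "hd xs = s" using nth[of 0] ne by (simp add: hd_conv_nth)
    have last: "last xs = t" using nth[of K] ne len K unfolding h_def by (simp add: last_conv_nth)
    have xi': "\<forall>i<K. s + i * h \<le> \<xi> i \<and> \<xi> i \<le> s + Suc i * h" using xi unfolding h_def .
    have hd': "h < \<delta>" using K unfolding h_def by simp
    have "\<forall>i<length xs - 1. xs ! Suc i - xs ! i < \<delta> \<and> xs ! i \<le> \<xi> i \<and> \<xi> i \<le> xs ! Suc i"
    proof (intro allI impI)
      fix i assume "i < length xs - 1"
      then have i: "i < K" using len by simp
      then have "xs ! Suc i = s + Suc i * h" "xs ! i = s + i * h" using nth by auto
      then show "xs ! Suc i - xs ! i < \<delta> \<and> xs ! i \<le> \<xi> i \<and> \<xi> i \<le> xs ! Suc i"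
        using xi' i hd' by (auto simp: algebra_simps)
    qed
    then have "\<bar>(\<Sum>i<length xs - 1. f (\<xi> i) * (R (xs ! Suc i) - R (xs ! i))) - I\<bar> < \<epsilon>"
      using H ne sorted hd last by blast
    moreover have "(\<Sum>i<length xs - 1. f (\<xi> i) * (R (xs ! Suc i) - R (xs ! i))) =
       (\<Sum>i<K. f (\<xi> i) * (R (s + Suc i * ((t - s) / K)) - R (s + i * ((t - s) / K))))"
      using nth len unfolding h_def by (intro sum.cong) auto
    ultimately show "\<bar>(\<Sum>i<K. f (\<xi> i) * (R (s + Suc i * ((t - s) / K)) - R (s + i * ((t - s) / K)))) - I\<bar> < \<epsilon>"
      by simp
  qed
qed

lemma bv_uniform:
  assumes "\<forall>xs. sorted xs \<and> set xs \<subseteq> {a..b} \<longrightarrow>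
        (\<Sum>i<length xs - 1. \<bar>R (xs ! Suc i) - R (xs ! i)\<bar>) \<le> M"
    "a \<le> p" "p \<le> q" "q \<le> b" "K > 0"
  shows "(\<Sum>i<K. \<bar>R (p + Suc i * ((q - p) / K)) - R (p + i * ((q - p) / K))\<bar>) \<le> M"
proof -
  define h where "h = (q - p) / K"
  have h0: "h \<ge> 0" using assms unfolding h_def by simp
  define xs where "xs = map (\<lambda>i. p + real i * h) [0..<Suc K]"
  have len: "length xs = Suc K" unfolding xs_def by simp
  have nth: "\<And>i. i < Suc K \<Longrightarrow> xs ! i = p + real i * h" unfolding xs_def
    by (simp del: upt_Suc)
  have sorted: "sorted xs" unfolding sorted_iff_nth_mono
    using nth len h0 by (simp add: mult_right_mono)
  have "set xs \<subseteq> {a..b}"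
  proof
    fix x assume "x \<in> set xs"
    then obtain i where i0: "i < length xs" "xs ! i = x" by (auto simp: in_set_conv_nth)
    then have i: "i < Suc K" "x = p + real i * h" using nth len by auto
    have "real i * h \<le> K * h" using i h0 by (intro mult_right_mono) auto
    also have "K * h = q - p" using assms(5) unfolding h_def by simp
    moreover have "0 \<le> real i * h" using h0 by simp
    ultimately show "x \<in> {a..b}" using i assms by auto
  qed
  then have "(\<Sum>i<length xs - 1. \<bar>R (xs ! Suc i) - R (xs ! i)\<bar>) \<le> M" using assms(1) sorted by blast
  moreover have "(\<Sum>i<length xs - 1. \<bar>R (xs ! Suc i) - R (xs ! i)\<bar>) =
    (\<Sum>i<K. \<bar>R (p + Suc i * ((q - p) / K)) - R (p + i * ((q - p) / K))\<bar>)"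
    using nth len unfolding h_def by (intro sum.cong) auto
  ultimately show ?thesis by simp
qed


lemma rs_exists_glob:
  fixes f F :: "real \<Rightarrow> real"
  assumes cf: "continuous_on UNIV f" and cF: "continuous_on UNIV F" and mF: "mono F" and st: "s \<le> t"
  shows "has_rs_integral f F s t (set_lebesgue_integral (interval_measure F) {s<..t} f)"
proof -
  define \<mu> where "\<mu> = interval_measure F"
  define J where "J a b = set_lebesgue_integral \<mu> {a<..b} f" for a b
  have rc: "\<And>a. continuous (at_right a) F"
    using cF continuous_on_eq_continuous_at[OF open_UNIV] continuous_at_imp_continuous_at_within by blast
  have mono': "\<And>x y. x \<le> y \<Longrightarrow> F x \<le> F y" using mF by (simp add: monoD)
  have emI: "\<And>a b. a \<le> b \<Longrightarrow> emeasure \<mu> {a<..b} = ennreal (F b - F a)"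
    unfolding \<mu>_def using emeasure_interval_measure_Ioc[OF _ mono' rc] by blast
  have mI: "\<And>a b. a \<le> b \<Longrightarrow> measure \<mu> {a<..b} = F b - F a"
    unfolding \<mu>_def using measure_interval_measure_Ioc[OF _ mono' rc] by blast
  have integ: "set_integrable \<mu> {a<..b} g"
    if g: "continuous_on UNIV g" and ab: "a \<le> b" for g :: "real \<Rightarrow> real" and a b
  proof -
    have "compact (g ` {a..b})"
      by (rule compact_continuous_image[OF continuous_on_subset[OF g] compact_Icc]) auto
    then obtain B where B: "\<forall>x\<in>{a..b}. norm (g x) \<le> B"
      using compact_imp_bounded bounded_iff by (metis imageI)
    have gm: "g \<in> borel_measurable \<mu>"
      unfolding \<mu>_def measurable_cong_sets[OF sets_interval_measure refl]
      by (rule borel_measurable_continuous_onI[OF g])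
    show ?thesis unfolding set_integrable_def
    proof (rule integrableI_bounded_set_indicator[where B=B])
      show "{a<..b} \<in> sets \<mu>" unfolding \<mu>_def by simp
      show "g \<in> borel_measurable \<mu>" by (rule gm)
      show "emeasure \<mu> {a<..b} < \<infinity>" using emI[OF ab] by simp
      show "AE x\<in>{a<..b} in \<mu>. norm (g x) \<le> B" using B by (intro AE_I2) auto
    qed
  qed
  have add: "J a c = J a b + J b c" if "a \<le> b" "b \<le> c" for a b c
  proof -
    have "{a<..c} = {a<..b} \<union> {b<..c}" using that by (simp add: ivl_disj_un_two(6))
    then show ?thesis unfolding J_def
      using set_integral_Un[of "{a<..b}" "{b<..c}" \<mu> f] integ[OF cf] that by auto
  qed
  have est: "\<bar>J a b - y * (F b - F a)\<bar> \<le> \<eta> * (F b - F a)"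
    if ab: "a \<le> b" and H: "\<forall>x\<in>{a<..b}. \<bar>f x - y\<bar> \<le> \<eta>" for a b y \<eta>
  proof -
    have i1: "set_integrable \<mu> {a<..b} (\<lambda>x. f x - y)"
      by (rule integ[OF _ ab]) (intro continuous_intros cf)
    have i2: "set_integrable \<mu> {a<..b} (\<lambda>x. \<eta>)"
      by (rule integ[OF _ ab]) (intro continuous_intros)
    have i3: "set_integrable \<mu> {a<..b} (\<lambda>x. - \<eta>)"
      by (rule integ[OF _ ab]) (intro continuous_intros)
    have fin: "emeasure \<mu> {a<..b} \<noteq> \<infinity>" using emI[OF ab] by simp
    have sets: "{a<..b} \<in> sets \<mu>" unfolding \<mu>_def by simp
    have eq: "J a b - y * (F b - F a) = (\<integral>x\<in>{a<..b}. f x - y \<partial>\<mu>)"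
      unfolding J_def
      using set_integral_diff(2)[OF integ[OF cf ab] integ[OF _ ab, of "\<lambda>_. y"]]
        set_integral_const[OF sets fin, of y] mI[OF ab] by (simp add: mult.commute)
    have u: "(\<integral>x\<in>{a<..b}. f x - y \<partial>\<mu>) \<le> (\<integral>x\<in>{a<..b}. \<eta> \<partial>\<mu>)"
    proof (rule set_integral_mono[OF i1 i2])
      fix x assume "x \<in> {a<..b}" then show "f x - y \<le> \<eta>" using H[rule_format, of x] by (auto simp: abs_le_iff)
    qed
    have l: "(\<integral>x\<in>{a<..b}. - \<eta> \<partial>\<mu>) \<le> (\<integral>x\<in>{a<..b}. f x - y \<partial>\<mu>)"
    proof (rule set_integral_mono[OF i3 i1])
      fix x assume "x \<in> {a<..b}" then show "- \<eta> \<le> f x - y" using H[rule_format, of x] by (auto simp: abs_le_iff)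
    qed
    have c1: "(\<integral>x\<in>{a<..b}. \<eta> \<partial>\<mu>) = \<eta> * (F b - F a)"
      using set_integral_const[OF sets fin, of \<eta>] mI[OF ab] by simp
    have c2: "(\<integral>x\<in>{a<..b}. - \<eta> \<partial>\<mu>) = - (\<eta> * (F b - F a))"
      using set_integral_const[OF sets fin, of "-\<eta>"] mI[OF ab] by simp
    show ?thesis unfolding eq using u l c1 c2 by linarith
  qed
  have listsum: "\<And>xs. xs \<noteq> [] \<Longrightarrow> sorted xs \<Longrightarrow>
     (\<Sum>i<length xs - 1. J (xs ! i) (xs ! Suc i)) = J (hd xs) (last xs)"
  proof -
    fix xs :: "real list"
    show "xs \<noteq> [] \<Longrightarrow> sorted xs \<Longrightarrow> (\<Sum>i<length xs - 1. J (xs ! i) (xs ! Suc i)) = J (hd xs) (last xs)"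
    proof (induction xs)
      case Nil then show ?case by simp
    next
      case (Cons x ys)
      show ?case
      proof (cases "ys = []")
        case True
        then show ?thesis by (simp add: J_def set_lebesgue_integral_def)
      next
        case False
        then obtain n where n: "length ys = Suc n" by (cases ys) auto
        have s: "sorted ys" using Cons.prems by simp
        have IH: "(\<Sum>i<length ys - 1. J (ys ! i) (ys ! Suc i)) = J (hd ys) (last ys)"
          using Cons.IH False s by blast
        have x1: "x \<le> hd ys" using Cons.prems False by (cases ys) auto
        have x2: "hd ys \<le> last ys" using s False
          by (metis hd_conv_nth last_conv_nth le0 diff_less length_greater_0_conv sorted_nth_mono zero_less_one diff_le_self)
        have "(\<Sum>i<length (x # ys) - 1. J ((x # ys) ! i) ((x # ys) ! Suc i))
            = (\<Sum>i<Suc n. J ((x # ys) ! i) ((x # ys) ! Suc i))" using n by simp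
        also have "\<dots> = J x (ys ! 0) + (\<Sum>i<n. J (ys ! i) (ys ! Suc i))"
          by (subst sum.lessThan_Suc_shift) simp
        also have "\<dots> = J x (hd ys) + J (hd ys) (last ys)"
          using IH n False by (simp add: hd_conv_nth)
        also have "\<dots> = J x (last ys)" using add[OF x1 x2] by simp
        finally show ?thesis using False by simp
      qed
    qed
  qed
  have ucf: "uniformly_continuous_on {s..t} f"
    by (rule compact_uniformly_continuous[OF continuous_on_subset[OF cf] compact_Icc]) auto
  show ?thesis
    unfolding has_rs_integral_def
  proof (intro allI impI)
    fix \<epsilon> :: real assume e: "\<epsilon> > 0"
    define \<eta> where "\<eta> = \<epsilon> / (2 * (F t - F s + 1))"
    have Fst: "F s \<le> F t" using mono' st by simp
    have eta: "\<eta> > 0" unfolding \<eta>_def using e Fst by simp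
    have eta2: "\<eta> * (F t - F s) < \<epsilon>"
    proof -
      have "\<eta> * (F t - F s) < \<eta> * (2 * (F t - F s + 1))" using eta Fst by (intro mult_strict_left_mono) auto
      also have "\<dots> = \<epsilon>" unfolding \<eta>_def using Fst by simp
      finally show ?thesis .
    qed
    obtain \<delta> where d: "\<delta> > 0" and dH: "\<forall>x\<in>{s..t}. \<forall>x'\<in>{s..t}. dist x' x < \<delta> \<longrightarrow> dist (f x') (f x) < \<eta>"
      using ucf eta unfolding uniformly_continuous_on_def by meson
    show "\<exists>\<delta>>0. \<forall>xs \<xi>.
        xs \<noteq> [] \<and> sorted xs \<and> hd xs = s \<and> last xs = t \<and>
        (\<forall>i<length xs - 1. xs ! Suc i - xs ! i < \<delta> \<and> xs ! i \<le> \<xi> i \<and> \<xi> i \<le> xs ! Suc i)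
        \<longrightarrow> \<bar>(\<Sum>i<length xs - 1. f (\<xi> i) * (F (xs ! Suc i) - F (xs ! i))) - set_lebesgue_integral (interval_measure F) {s<..t} f\<bar> < \<epsilon>"
    proof (intro exI[of _ \<delta>] conjI d allI impI)
      fix xs \<xi> assume P: "xs \<noteq> [] \<and> sorted xs \<and> hd xs = s \<and> last xs = t \<and>
        (\<forall>i<length xs - 1. xs ! Suc i - xs ! i < \<delta> \<and> xs ! i \<le> \<xi> i \<and> \<xi> i \<le> xs ! Suc i)"
      let ?n = "length xs - 1"
      have pin: "\<And>i. i < length xs \<Longrightarrow> s \<le> xs ! i \<and> xs ! i \<le> t" using P part_in by blast
      have Jst: "J s t = (\<Sum>i<?n. J (xs ! i) (xs ! Suc i))" using listsum P by simp
      have tel: "(\<Sum>i<?n. F (xs ! Suc i) - F (xs ! i)) = F t - F s"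
      proof -
        have "xs ! 0 = s" "xs ! (length xs - 1) = t" using P by (auto simp: hd_conv_nth last_conv_nth)
        then show ?thesis using sum_lessThan_telescope[of "\<lambda>i. F (xs ! i)" ?n] by simp
      qed
      have trm: "\<bar>f (\<xi> i) * (F (xs ! Suc i) - F (xs ! i)) - J (xs ! i) (xs ! Suc i)\<bar>
          \<le> \<eta> * (F (xs ! Suc i) - F (xs ! i))" if i: "i < ?n" for i
      proof -
        have a: "xs ! i \<le> \<xi> i" "\<xi> i \<le> xs ! Suc i" "xs ! Suc i - xs ! i < \<delta>" using P i by auto
        have b: "s \<le> xs ! i" "xs ! Suc i \<le> t" using pin[of i] pin[of "Suc i"] i by auto
        have "\<forall>x\<in>{xs ! i<..xs ! Suc i}. \<bar>f x - f (\<xi> i)\<bar> \<le> \<eta>"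
        proof
          fix x assume x: "x \<in> {xs ! i<..xs ! Suc i}"
          have "dist x (\<xi> i) < \<delta>" using x a by (auto simp: dist_real_def)
          then have "dist (f x) (f (\<xi> i)) < \<eta>" using dH x a b by auto
          then show "\<bar>f x - f (\<xi> i)\<bar> \<le> \<eta>" by (simp add: dist_real_def)
        qed
        from est[OF _ this] a show ?thesis by (simp add: abs_minus_commute)
      qed
      have "\<bar>(\<Sum>i<?n. f (\<xi> i) * (F (xs ! Suc i) - F (xs ! i))) - J s t\<bar>
          = \<bar>\<Sum>i<?n. (f (\<xi> i) * (F (xs ! Suc i) - F (xs ! i)) - J (xs ! i) (xs ! Suc i))\<bar>"
        unfolding Jst by (simp add: sum_subtractf)
      also have "\<dots> \<le> (\<Sum>i<?n. \<bar>f (\<xi> i) * (F (xs ! Suc i) - F (xs ! i)) - J (xs ! i) (xs ! Suc i)\<bar>)"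
        by (rule sum_abs)
      also have "\<dots> \<le> (\<Sum>i<?n. \<eta> * (F (xs ! Suc i) - F (xs ! i)))"
        by (intro sum_mono trm) simp
      also have "\<dots> = \<eta> * (F t - F s)" unfolding sum_distrib_left[symmetric] tel ..
      finally show "\<bar>(\<Sum>i<?n. f (\<xi> i) * (F (xs ! Suc i) - F (xs ! i))) - set_lebesgue_integral (interval_measure F) {s<..t} f\<bar> < \<epsilon>"
        using eta2 unfolding J_def \<mu>_def by simp
    qed
  qed
qed

lemma rs_exists_mono:
  fixes f F :: "real \<Rightarrow> real"
  assumes cf: "continuous_on {s..t} f" and cF: "continuous_on {s..t} F"
    and mF: "mono_on {s..t} F" and st: "s \<le> t"
  shows "\<exists>I. has_rs_integral f F s t I"
proof -
  define c where "c x = max s (min t x)" for x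
  have cc: "continuous_on UNIV c" unfolding c_def by (intro continuous_intros)
  have crange: "c x \<in> {s..t}" for x unfolding c_def using st by auto
  have cid: "x \<in> {s..t} \<Longrightarrow> c x = x" for x unfolding c_def by auto
  have c1: "continuous_on UNIV (f \<circ> c)"
    by (rule continuous_on_compose[OF cc continuous_on_subset[OF cf]]) (use crange in auto)
  have c2: "continuous_on UNIV (F \<circ> c)"
    by (rule continuous_on_compose[OF cc continuous_on_subset[OF cF]]) (use crange in auto)
  have m2: "mono (F \<circ> c)"
  proof
    fix x y :: real assume "x \<le> y"
    then have "c x \<le> c y" unfolding c_def by auto
    then show "(F \<circ> c) x \<le> (F \<circ> c) y" using mF crange by (simp add: mono_onD)
  qed
  have "has_rs_integral (f \<circ> c) (F \<circ> c) s t (set_lebesgue_integral (interval_measure (F \<circ> c)) {s<..t} (f \<circ> c))"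
    by (rule rs_exists_glob[OF c1 c2 m2 st])
  then have "has_rs_integral f F s t (set_lebesgue_integral (interval_measure (F \<circ> c)) {s<..t} (f \<circ> c))"
    by (rule rs_cong[rotated 2]) (auto simp: cid)
  then show ?thesis by blast
qed


lemma small_K:
  fixes a \<delta> :: real assumes "\<delta> > 0" "a \<ge> 0"
  obtains K :: nat where "K > 0" "a / K < \<delta>"
proof -
  obtain K :: nat where K: "a / \<delta> < K" using reals_Archimedean2 by blast
  have "K > 0" using K assms by (metis divide_nonneg_pos not_less of_nat_0_less_iff order_le_less_trans)
  moreover have "a / K < \<delta>" using K assms \<open>K > 0\<close> by (simp add: divide_less_eq mult.commute)
  ultimately show ?thesis using that by blast
qed

lemma sum_block: "sum g {m..<m+K} = (\<Sum>i<K. g (m+i))" for g :: "nat \<Rightarrow> real"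
proof -
  have "sum g {0+m..<K+m} = sum (\<lambda>i. g (i + m)) {0..<K}" by (rule sum.shift_bounds_nat_ivl)
  then show ?thesis by (simp add: add.commute lessThan_atLeast0)
qed

lemma rs_nonneg:
  assumes I: "has_rs_integral f F s t I" and st: "s \<le> t" and mF: "mono_on {s..t} F"
    and fpos: "\<forall>v\<in>{s..t}. 0 \<le> f v"
  shows "0 \<le> I"
proof (rule ccontr)
  assume "\<not> 0 \<le> I"
  then have e: "- I > 0" by simp
  obtain \<delta> where d: "\<delta> > 0" and H: "\<And>K \<xi>. K > 0 \<Longrightarrow> (t - s) / K < \<delta> \<Longrightarrow>
     (\<forall>i<K. s + i * ((t - s) / K) \<le> \<xi> i \<and> \<xi> i \<le> s + Suc i * ((t - s) / K)) \<Longrightarrow>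
     \<bar>(\<Sum>i<K. f (\<xi> i) * (F (s + Suc i * ((t - s) / K)) - F (s + i * ((t - s) / K)))) - I\<bar> < - I"
    using rs_uniform[OF I st e] by blast
  obtain K :: nat where K: "K > 0" "(t - s) / K < \<delta>" using small_K[OF d, of "t - s"] st by auto
  define h where "h = (t - s) / K"
  have h0: "h \<ge> 0" using st K unfolding h_def by simp
  have hK: "K * h = t - s" using K unfolding h_def by simp
  have inr: "s + i * h \<in> {s..t}" if "i \<le> K" for i :: nat
  proof -
    have "i * h \<le> K * h" using that h0 by (intro mult_right_mono) auto
    then show ?thesis using hK h0 by simp
  qed
  have "(\<Sum>i<K. f (s + i * h) * (F (s + Suc i * h) - F (s + i * h))) \<ge> 0"
  proof (intro sum_nonneg mult_nonneg_nonneg)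
    fix i assume "i \<in> {..<K}"
    then have i: "i < K" by simp
    show "0 \<le> f (s + real i * h)" using fpos inr[of i] i by simp
    have "s + i * h \<le> s + Suc i * h" using h0 by (simp add: algebra_simps)
    then show "0 \<le> F (s + Suc i * h) - F (s + i * h)"
      using mF inr[of i] inr[of "Suc i"] i by (simp add: mono_onD)
  qed
  moreover have "\<bar>(\<Sum>i<K. f (s + i * h) * (F (s + Suc i * h) - F (s + i * h))) - I\<bar> < - I"
  proof (rule H[of K "\<lambda>i. s + i * h", folded h_def, OF K(1)])
    show "h < \<delta>" using K unfolding h_def by simp
    show "\<forall>i<K. s + i * h \<le> s + i * h \<and> s + i * h \<le> s + Suc i * h" using h0 by (simp add: distrib_right)
  qed
  ultimately show False by linarith
qed

lemma rs_zero_flat: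
  assumes I: "has_rs_integral f F s t I" and st: "s \<le> t" and mF: "mono_on {s..t} F"
    and flat: "\<forall>x y. s \<le> x \<and> x \<le> y \<and> y \<le> t \<and> F x < F y \<longrightarrow> (\<exists>w\<in>{x..y}. f w = 0)"
  shows "I = 0"
proof (rule ccontr)
  assume "I \<noteq> 0"
  then have e: "\<bar>I\<bar> > 0" by simp
  obtain \<delta> where d: "\<delta> > 0" and H: "\<And>K \<xi>. K > 0 \<Longrightarrow> (t - s) / K < \<delta> \<Longrightarrow>
     (\<forall>i<K. s + i * ((t - s) / K) \<le> \<xi> i \<and> \<xi> i \<le> s + Suc i * ((t - s) / K)) \<Longrightarrow>
     \<bar>(\<Sum>i<K. f (\<xi> i) * (F (s + Suc i * ((t - s) / K)) - F (s + i * ((t - s) / K)))) - I\<bar> < \<bar>I\<bar>"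
    using rs_uniform[OF I st e] by blast
  obtain K :: nat where K: "K > 0" "(t - s) / K < \<delta>" using small_K[OF d, of "t - s"] st by auto
  define h where "h = (t - s) / K"
  have h0: "h \<ge> 0" using st K unfolding h_def by simp
  have hK: "K * h = t - s" using K unfolding h_def by simp
  have inr: "s + i * h \<in> {s..t}" if "i \<le> K" for i :: nat
  proof -
    have "i * h \<le> K * h" using that h0 by (intro mult_right_mono) auto
    then show ?thesis using hK h0 by simp
  qed
  define \<xi> where "\<xi> i = (if F (s + i * h) < F (s + Suc i * h)
      then (SOME w. w \<in> {s + i * h..s + Suc i * h} \<and> f w = 0) else s + i * h)" for i :: nat
  have tags: "\<forall>i<K. s + i * h \<le> \<xi> i \<and> \<xi> i \<le> s + Suc i * h"
    and zero: "\<forall>i<K. f (\<xi> i) * (F (s + Suc i * h) - F (s + i * h)) = 0"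
  proof (safe)
    fix i assume i: "i < K"
    have le: "s + i * h \<le> s + Suc i * h" using h0 by (simp add: algebra_simps)
    have Fle: "F (s + i * h) \<le> F (s + Suc i * h)"
      using mF inr[of i] inr[of "Suc i"] i le by (simp add: mono_onD)
    show "s + i * h \<le> \<xi> i" "\<xi> i \<le> s + Suc i * h" "f (\<xi> i) * (F (s + Suc i * h) - F (s + i * h)) = 0"
    proof (atomize(full), cases "F (s + i * h) < F (s + Suc i * h)")
      case True
      then have "\<exists>w. w \<in> {s + i * h..s + Suc i * h} \<and> f w = 0"
        using flat[rule_format, of "s + i * h" "s + Suc i * h"] inr[of i] inr[of "Suc i"] i le by auto
      then have "\<xi> i \<in> {s + i * h..s + Suc i * h} \<and> f (\<xi> i) = 0"
        unfolding \<xi>_def using True by (simp only: if_True) (rule someI_ex)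
      then show "s + i * h \<le> \<xi> i \<and> \<xi> i \<le> s + Suc i * h \<and> f (\<xi> i) * (F (s + Suc i * h) - F (s + i * h)) = 0"
        by auto
    next
      case False
      then have "F (s + i * h) = F (s + Suc i * h)" using Fle by simp
      then show "s + i * h \<le> \<xi> i \<and> \<xi> i \<le> s + Suc i * h \<and> f (\<xi> i) * (F (s + Suc i * h) - F (s + i * h)) = 0"
        unfolding \<xi>_def using False le by simp
    qed
  qed
  have "\<bar>(\<Sum>i<K. f (\<xi> i) * (F (s + Suc i * h) - F (s + i * h))) - I\<bar> < \<bar>I\<bar>"
  proof (rule H[of K \<xi>, folded h_def, OF K(1)])
    show "h < \<delta>" using K unfolding h_def by simp
  qed (rule tags)
  moreover have "(\<Sum>i<K. f (\<xi> i) * (F (s + Suc i * h) - F (s + i * h))) = 0"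
    using zero by (intro sum.neutral) (simp del: of_nat_Suc)
  ultimately show False by simp
qed


lemma rs_mono_neg:
  fixes f R :: "real \<Rightarrow> real"
  assumes pq: "0 \<le> p" "p \<le> q" "q \<le> T" and cf: "continuous_on {p..q} f"
    and m: "m > 0" "\<forall>v\<in>{p..q}. m \<le> f v"
    and bv: "bounded_variation_on R 0 T"
    and H: "\<forall>s t. p \<le> s \<and> s \<le> t \<and> t \<le> q \<longrightarrow> (\<exists>I. has_rs_integral f R s t I \<and> I \<le> 0)"
  shows "R q \<le> R p"
proof -
  obtain M where M: "\<forall>xs. sorted xs \<and> set xs \<subseteq> {0..T} \<longrightarrow>
        (\<Sum>i<length xs - 1. \<bar>R (xs ! Suc i) - R (xs ! i)\<bar>) \<le> M"
    using bv unfolding bounded_variation_on_def by blast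
  have M0: "0 \<le> M" using M[rule_format, of "[]"] by simp
  have ucf: "uniformly_continuous_on {p..q} f"
    by (rule compact_uniformly_continuous[OF cf compact_Icc])
  have main: "R q - R p \<le> \<eta> * (1 + M) / m" if eta: "\<eta> > 0" for \<eta>
  proof -
    obtain \<delta>1 where d1: "\<delta>1 > 0" and dH: "\<forall>x\<in>{p..q}. \<forall>x'\<in>{p..q}. dist x' x < \<delta>1 \<longrightarrow> dist (f x') (f x) < \<eta>"
      using ucf eta unfolding uniformly_continuous_on_def by meson
    obtain N :: nat where N: "N > 0" "(q - p) / N < \<delta>1" using small_K[OF d1, of "q - p"] pq by auto
    define h where "h = (q - p) / N"
    have h0: "h \<ge> 0" using pq N unfolding h_def by simp
    have hN: "N * h = q - p" using N unfolding h_def by simp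
    define y where "y k = p + real k * h" for k :: nat
    have yin: "y k \<in> {p..q}" if "k \<le> N" for k
    proof -
      have "k * h \<le> N * h" using that h0 by (intro mult_right_mono) auto
      then show ?thesis using hN h0 unfolding y_def by simp
    qed
    have ysuc: "y (Suc k) - y k = h" for k unfolding y_def by (simp add: algebra_simps)
    have eN: "\<eta> / N > 0" using eta N by simp
    have ex: "\<exists>d. d > 0 \<and> (\<exists>I\<le>0. \<forall>K \<xi>. K > 0 \<longrightarrow> h / K < d \<longrightarrow>
         (\<forall>i<K. y k + i * (h / K) \<le> \<xi> i \<and> \<xi> i \<le> y k + Suc i * (h / K)) \<longrightarrow>
         \<bar>(\<Sum>i<K. f (\<xi> i) * (R (y k + Suc i * (h / K)) - R (y k + i * (h / K)))) - I\<bar> < \<eta> / N)"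
      if k: "k \<in> {..<N}" for k
    proof -
      have le: "y k \<le> y (Suc k)" using ysuc h0 by (metis diff_ge_0_iff_ge)
      obtain I where I: "has_rs_integral f R (y k) (y (Suc k)) I" "I \<le> 0"
      proof -
        have "p \<le> y k" "y (Suc k) \<le> q" using yin[of k] yin[of "Suc k"] k by auto
        then show ?thesis using H[rule_format, of "y k" "y (Suc k)"] le that by blast
      qed
      obtain d where d: "d > 0" and dd: "\<And>K \<xi>. K > 0 \<Longrightarrow> (y (Suc k) - y k) / K < d \<Longrightarrow>
       (\<forall>i<K. y k + i * ((y (Suc k) - y k) / K) \<le> \<xi> i \<and> \<xi> i \<le> y k + Suc i * ((y (Suc k) - y k) / K)) \<Longrightarrow>
       \<bar>(\<Sum>i<K. f (\<xi> i) * (R (y k + Suc i * ((y (Suc k) - y k) / K)) - R (y k + i * ((y (Suc k) - y k) / K)))) - I\<bar> < \<eta> / N"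
        using rs_uniform[OF I(1) le eN] by blast
      show ?thesis using d dd I(2) unfolding ysuc by blast
    qed
    then obtain D where D: "\<forall>k\<in>{..<N}. D k > 0 \<and> (\<exists>I\<le>0. \<forall>K \<xi>. K > 0 \<longrightarrow> h / K < D k \<longrightarrow>
         (\<forall>i<K. y k + i * (h / K) \<le> \<xi> i \<and> \<xi> i \<le> y k + Suc i * (h / K)) \<longrightarrow>
         \<bar>(\<Sum>i<K. f (\<xi> i) * (R (y k + Suc i * (h / K)) - R (y k + i * (h / K)))) - I\<bar> < \<eta> / N)"
    proof -
      have "\<forall>k\<in>{..<N}. \<exists>d. d > 0 \<and> (\<exists>I\<le>0. \<forall>K \<xi>. K > 0 \<longrightarrow> h / K < d \<longrightarrow>
         (\<forall>i<K. y k + i * (h / K) \<le> \<xi> i \<and> \<xi> i \<le> y k + Suc i * (h / K)) \<longrightarrow>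
         \<bar>(\<Sum>i<K. f (\<xi> i) * (R (y k + Suc i * (h / K)) - R (y k + i * (h / K)))) - I\<bar> < \<eta> / N)"
        using ex by blast
      from bchoice[OF this] show ?thesis using that by blast
    qed
    define dm where "dm = Min (D ` {..<N})"
    have dm: "dm > 0" unfolding dm_def using D N by (subst Min_gr_iff) auto
    have dmle: "k < N \<Longrightarrow> dm \<le> D k" for k unfolding dm_def by (intro Min_le) auto
    obtain K :: nat where K: "K > 0" "h / K < dm" using small_K[OF dm h0] by blast
    define g where "g = h / K"
    have g0: "g \<ge> 0" using h0 K unfolding g_def by simp
    have gK: "K * g = h" using K unfolding g_def by simp
    define z where "z j = p + real j * g" for j :: nat
    have yz: "y k + real i * g = z (k * K + i)" for k i
      unfolding y_def z_def by (simp add: algebra_simps gK[symmetric])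
    define dR where "dR j = R (z (Suc j)) - R (z j)" for j
    define V where "V k = (\<Sum>i<K. \<bar>dR (k * K + i)\<bar>)" for k
    define Dk where "Dk k = R (y (Suc k)) - R (y k)" for k
    have Dk_sum: "Dk k = (\<Sum>i<K. dR (k * K + i))" for k
    proof -
      have "(\<Sum>i<K. dR (k * K + i)) = (\<Sum>i<K. R (z (k * K + Suc i)) - R (z (k * K + i)))"
        unfolding dR_def by simp
      also have "\<dots> = R (z (k * K + K)) - R (z (k * K + 0))"
        by (rule sum_lessThan_telescope[of "\<lambda>i. R (z (k * K + i))"])
      also have "z (k * K + K) = y (Suc k)" using yz[of "Suc k" 0] yz[of k K] gK
        unfolding y_def by (simp add: algebra_simps)
      also have "z (k * K + 0) = y k" using yz[of k 0] by simp
      finally show ?thesis unfolding Dk_def by simp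
    qed
    have cellest: "Dk k \<le> (\<eta> / N + \<eta> * V k) / m" if k: "k < N" for k
    proof -
      obtain I where I: "I \<le> 0" and IH: "\<forall>K \<xi>. K > 0 \<longrightarrow> h / K < D k \<longrightarrow>
         (\<forall>i<K. y k + i * (h / K) \<le> \<xi> i \<and> \<xi> i \<le> y k + Suc i * (h / K)) \<longrightarrow>
         \<bar>(\<Sum>i<K. f (\<xi> i) * (R (y k + Suc i * (h / K)) - R (y k + i * (h / K)))) - I\<bar> < \<eta> / N"
        using D k by blast
      have "\<bar>(\<Sum>i<K. f (y k + i * g) * (R (y k + Suc i * g) - R (y k + i * g))) - I\<bar> < \<eta> / N"
      proof (rule IH[rule_format, of K "\<lambda>i. y k + i * g", folded g_def])
        show "0 < K" by (rule K)
        show "g < D k" using K dmle[OF k] unfolding g_def by simp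
      qed (use g0 in \<open>auto simp: distrib_right\<close>)
      then have S: "(\<Sum>i<K. f (z (k * K + i)) * dR (k * K + i)) < \<eta> / N"
        using I unfolding dR_def yz by (simp add: yz[symmetric] algebra_simps)
      have zin: "z (k * K + i) \<in> {p..q}" if "i \<le> K" for i
      proof -
        have "z (k * K + i) = y k + i * g" using yz by simp
        moreover have "i * g \<le> K * g" using that g0 by (intro mult_right_mono) auto
        moreover have "y k \<in> {p..q}" "y (Suc k) \<in> {p..q}" using yin k by auto
        moreover have "y (Suc k) = y k + K * g" using ysuc[of k] gK by simp
        moreover have "0 \<le> i * g" using g0 by simp
        ultimately show ?thesis by auto
      qed
      have close: "\<bar>f (z (k * K + i)) - f (y k)\<bar> < \<eta>" if i: "i < K" for i
      proof -
        have "z (k * K + i) - y k = i * g" using yz[of k i] by simp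
        moreover have "i * g \<le> K * g" using i g0 by (intro mult_right_mono) auto
        ultimately have "dist (z (k * K + i)) (y k) < \<delta>1"
          using gK h_def N g0 by (auto simp: dist_real_def)
        then show ?thesis using dH zin[of i] yin[of k] i k by (auto simp: dist_real_def)
      qed
      have "f (y k) * Dk k = (\<Sum>i<K. f (y k) * dR (k * K + i))"
        unfolding Dk_sum by (simp add: sum_distrib_left)
      also have "\<dots> \<le> (\<Sum>i<K. f (z (k * K + i)) * dR (k * K + i) + \<eta> * \<bar>dR (k * K + i)\<bar>)"
      proof (rule sum_mono)
        fix i assume "i \<in> {..<K}"
        then have c: "\<bar>f (z (k * K + i)) - f (y k)\<bar> < \<eta>" using close by simp
        have "\<bar>(f (y k) - f (z (k * K + i))) * dR (k * K + i)\<bar> \<le> \<eta> * \<bar>dR (k * K + i)\<bar>"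
          unfolding abs_mult using c by (intro mult_right_mono) auto
        then show "f (y k) * dR (k * K + i) \<le> f (z (k * K + i)) * dR (k * K + i) + \<eta> * \<bar>dR (k * K + i)\<bar>"
          by (simp add: algebra_simps abs_le_iff)
      qed
      also have "\<dots> = (\<Sum>i<K. f (z (k * K + i)) * dR (k * K + i)) + \<eta> * V k"
        unfolding V_def by (simp add: sum.distrib sum_distrib_left)
      finally have fD: "f (y k) * Dk k < \<eta> / N + \<eta> * V k" using S by linarith
      have V0: "V k \<ge> 0" unfolding V_def by (simp add: sum_nonneg)
      show ?thesis
      proof (cases "Dk k \<le> 0")
        case True
        have "0 \<le> (\<eta> / N + \<eta> * V k) / m" using V0 eta N m by (intro divide_nonneg_pos add_nonneg_nonneg mult_nonneg_nonneg) auto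
        then show ?thesis using True by linarith
      next
        case False
        have "m * Dk k \<le> f (y k) * Dk k" using m yin[of k] k False by (intro mult_right_mono) auto
        then have "m * Dk k \<le> \<eta> / N + \<eta> * V k" using fD by simp
        then show ?thesis using m by (simp add: field_simps)
      qed
    qed
    have "R q - R p = (\<Sum>k<N. Dk k)"
    proof -
      have "(\<Sum>k<N. Dk k) = R (y N) - R (y 0)"
        unfolding Dk_def by (rule sum_lessThan_telescope)
      moreover have "y N = q" "y 0 = p" unfolding y_def using hN by auto
      ultimately show ?thesis by simp
    qed
    also have "\<dots> \<le> (\<Sum>k<N. (\<eta> / N + \<eta> * V k) / m)"
      by (intro sum_mono cellest) simp
    also have "\<dots> = (\<eta> + \<eta> * (\<Sum>k<N. V k)) / m"
      using N by (simp add: sum_divide_distrib[symmetric] sum.distrib sum_distrib_left)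
    also have "(\<Sum>k<N. V k) = (\<Sum>j<N * K. \<bar>dR j\<bar>)"
    proof -
      have "(\<Sum>k<N. V k) = (\<Sum>k<N. sum (\<lambda>j. \<bar>dR j\<bar>) {k * K..<k * K + K})"
        unfolding V_def by (simp add: sum_block)
      also have "\<dots> = (\<Sum>j<N * K. \<bar>dR j\<bar>)" by (rule sum.nat_group)
      finally show ?thesis .
    qed
    also have "(\<Sum>j<N * K. \<bar>dR j\<bar>) \<le> M"
    proof -
      have NK: "N * K > 0" using N K by simp
      have gg: "(q - p) / real (N * K) = g" unfolding g_def h_def by simp
      have "(\<Sum>i<N * K. \<bar>R (p + Suc i * ((q - p) / (N * K))) - R (p + i * ((q - p) / (N * K)))\<bar>) \<le> M"
        by (rule bv_uniform[OF M _ _ _ NK]) (use pq in auto)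
      then show ?thesis unfolding dR_def z_def gg by simp
    qed
    finally show ?thesis using eta m by (simp add: divide_right_mono mult_left_mono algebra_simps)
  qed
  show ?thesis
  proof (rule ccontr)
    assume "\<not> R q \<le> R p"
    then have pos: "R q - R p > 0" by simp
    define \<eta> where "\<eta> = (R q - R p) * m / (2 * (1 + M))"
    have eta: "\<eta> > 0" unfolding \<eta>_def using pos m M0 by simp
    have "R q - R p \<le> \<eta> * (1 + M) / m" by (rule main[OF eta])
    also have "\<eta> * (1 + M) / m = (R q - R p) / 2"
    proof -
      have gen: "X * m / (2 * a) * a / m = X / 2" if "a > 0" "m > 0" for X a m :: real
        using that by (simp add: field_simps)
      show ?thesis unfolding \<eta>_def using gen[of "1 + M" m "R q - R p"] m M0 by simp
    qed
    finally show False using pos by simp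
  qed
qed


lemma left_lim_le:
  fixes g :: "real \<Rightarrow> real"
  assumes cg: "continuous_on {a..b} g" and pq: "a \<le> p" "p < q" "q \<le> b"
    and H: "\<forall>x\<in>{p..<q}. g x \<le> c"
  shows "g q \<le> c"
proof (rule ccontr)
  assume "\<not> g q \<le> c"
  then have e: "g q - c > 0" by simp
  have qin: "q \<in> {a..b}" using pq by auto
  obtain d where d: "d > 0" and dH: "\<forall>x'\<in>{a..b}. dist x' q < d \<longrightarrow> dist (g x') (g q) < g q - c"
    using cg qin e unfolding continuous_on_iff by meson
  define x where "x = max p (q - d / 2)"
  have x: "x \<in> {p..<q}" "x \<in> {a..b}" "dist x q < d" using pq d unfolding x_def by (auto simp: dist_real_def)
  have "dist (g x) (g q) < g q - c" using dH x by blast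
  moreover have "g x \<le> c" using H x by blast
  ultimately show False by (simp add: dist_real_def)
qed

lemma left_lim_ge:
  fixes g :: "real \<Rightarrow> real"
  assumes cg: "continuous_on {a..b} g" and pq: "a \<le> p" "p < q" "q \<le> b"
    and H: "\<forall>x\<in>{p..<q}. c \<le> g x"
  shows "c \<le> g q"
proof -
  have "(\<lambda>x. - g x) q \<le> - c"
    by (rule left_lim_le[OF continuous_on_minus[OF cg] pq]) (use H in auto)
  then show ?thesis by simp
qed

lemma skor_formula:
  fixes \<Lambda> \<psi> \<theta> :: "real \<Rightarrow> real"
  assumes cL: "continuous_on {0..T} \<Lambda>" and cP: "continuous_on {0..T} \<psi>" and cT: "continuous_on {0..T} \<theta>"
    and bnd: "\<forall>v\<in>{0..T}. \<theta> v \<le> \<Lambda> v \<and> \<Lambda> v \<le> \<psi> v"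
    and LT: "\<Lambda> T = 0" and thT: "\<theta> T \<le> 0"
    and HLo: "\<forall>p q. 0 \<le> p \<and> p \<le> q \<and> q \<le> T \<and> (\<forall>v\<in>{p..q}. \<Lambda> v < \<psi> v) \<longrightarrow> \<Lambda> q \<le> \<Lambda> p"
    and HUp: "\<forall>p q. 0 \<le> p \<and> p \<le> q \<and> q \<le> T \<and> (\<forall>v\<in>{p..q}. \<theta> v < \<Lambda> v) \<longrightarrow> \<Lambda> p \<le> \<Lambda> q"
    and t: "0 \<le> t" "t \<le> T"
  shows "\<Lambda> t = max (min (max (\<theta> T) 0) (INF v\<in>{t..T}. \<psi> v))
                    (SUP s\<in>{t..T}. min (\<theta> s) (INF v\<in>{t..s}. \<psi> v))"
proof -
  have MLh: "\<Lambda> q \<le> \<Lambda> p" if "0 \<le> p" "p \<le> q" "q \<le> T" "\<forall>v\<in>{p..<q}. \<Lambda> v < \<psi> v" for p q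
  proof (cases "p = q")
    case True then show ?thesis by simp
  next
    case False
    then have pq: "p < q" using that by simp
    have "\<forall>x\<in>{p..<q}. \<Lambda> x \<le> \<Lambda> p"
    proof
      fix x assume x: "x \<in> {p..<q}"
      show "\<Lambda> x \<le> \<Lambda> p" using HLo[rule_format, of p x] that x by auto
    qed
    then show ?thesis using left_lim_le[OF cL that(1) pq that(3)] by blast
  qed
  have MUh: "\<Lambda> p \<le> \<Lambda> q" if "0 \<le> p" "p \<le> q" "q \<le> T" "\<forall>v\<in>{p..<q}. \<theta> v < \<Lambda> v" for p q
  proof (cases "p = q")
    case True then show ?thesis by simp
  next
    case False
    then have pq: "p < q" using that by simp
    have "\<forall>x\<in>{p..<q}. \<Lambda> p \<le> \<Lambda> x"
    proof
      fix x assume x: "x \<in> {p..<q}"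
      show "\<Lambda> p \<le> \<Lambda> x" using HUp[rule_format, of p x] that x by auto
    qed
    then show ?thesis using left_lim_ge[OF cL that(1) pq that(3)] by blast
  qed
  have bddP: "bdd_below (\<psi> ` {a..b})" if "0 \<le> a" "b \<le> T" for a b
  proof -
    have "compact (\<psi> ` {a..b})"
      by (rule compact_continuous_image[OF continuous_on_subset[OF cP] compact_Icc]) (use that in auto)
    then show ?thesis by (intro bounded_imp_bdd_below compact_imp_bounded)
  qed
  have INFle: "(INF v\<in>{a..b}. \<psi> v) \<le> \<psi> x" if "0 \<le> a" "b \<le> T" "x \<in> {a..b}" for a b x
    by (rule cINF_lower[OF bddP[OF that(1,2)] that(3)])
  obtain B where B: "\<forall>v\<in>{0..T}. \<theta> v \<le> B"
  proof -
    have "compact (\<theta> ` {0..T})" by (rule compact_continuous_image[OF cT compact_Icc])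
    then have "bdd_above (\<theta> ` {0..T})" by (intro bounded_imp_bdd_above compact_imp_bounded)
    then show ?thesis using that by (auto simp: bdd_above_def)
  qed
  have bddS: "bdd_above ((\<lambda>s. min (\<theta> s) (INF v\<in>{t..s}. \<psi> v)) ` {t..T})"
    unfolding bdd_above_def
  proof (intro exI[of _ B] ballI)
    fix x assume "x \<in> (\<lambda>s. min (\<theta> s) (INF v\<in>{t..s}. \<psi> v)) ` {t..T}"
    then obtain s where s: "s \<in> {t..T}" "x = min (\<theta> s) (INF v\<in>{t..s}. \<psi> v)" by blast
    have "\<theta> s \<le> B" using B s t by auto
    then show "x \<le> B" using s by simp
  qed
  have G: "m \<le> \<Lambda> t" if s: "t \<le> s" "s \<le> T" and Ls: "m \<le> \<Lambda> s" and mP: "\<forall>v\<in>{t..s}. m \<le> \<psi> v" for s m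
  proof (rule ccontr)
    assume "\<not> m \<le> \<Lambda> t"
    then have Lt: "\<Lambda> t < m" by simp
    define S where "S = {t..s} \<inter> \<Lambda> -` {m..}"
    have cS: "closed S" unfolding S_def
      by (rule continuous_closed_preimage[OF continuous_on_subset[OF cL]]) (use t s in auto)
    have sS: "s \<in> S" using Ls s unfolding S_def by auto
    have bS: "bdd_below S" unfolding S_def by (auto simp: bdd_below_def)
    have tauS: "Inf S \<in> S" using closed_contains_Inf[of S] cS sS bS by blast
    define \<tau> where "\<tau> = Inf S"
    have tau: "t \<le> \<tau>" "\<tau> \<le> s" "m \<le> \<Lambda> \<tau>" using tauS unfolding S_def \<tau>_def by auto
    have below: "\<forall>v\<in>{t..<\<tau>}. \<Lambda> v < \<psi> v"
    proof
      fix v assume v: "v \<in> {t..<\<tau>}"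
      have "v \<notin> S" using v cInf_lower[OF _ bS, of v] unfolding \<tau>_def by force
      then have "\<Lambda> v < m" using v tau unfolding S_def by auto
      then show "\<Lambda> v < \<psi> v" using mP v tau by force
    qed
    have "\<Lambda> \<tau> \<le> \<Lambda> t" by (rule MLh) (use t tau s below in auto)
    then show False using tau Lt by simp
  qed
  have ge1: "min (max (\<theta> T) 0) (INF v\<in>{t..T}. \<psi> v) \<le> \<Lambda> t"
  proof (rule G[of T])
    show "t \<le> T" "T \<le> T" using t by auto
    show "min (max (\<theta> T) 0) (INF v\<in>{t..T}. \<psi> v) \<le> \<Lambda> T" using LT thT by simp
    show "\<forall>v\<in>{t..T}. min (max (\<theta> T) 0) (INF v\<in>{t..T}. \<psi> v) \<le> \<psi> v"
      using INFle[of t T] t by force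
  qed
  have ge2: "(SUP s\<in>{t..T}. min (\<theta> s) (INF v\<in>{t..s}. \<psi> v)) \<le> \<Lambda> t"
  proof (rule cSUP_least)
    show "{t..T} \<noteq> {}" using t by simp
    fix s assume s: "s \<in> {t..T}"
    show "min (\<theta> s) (INF v\<in>{t..s}. \<psi> v) \<le> \<Lambda> t"
    proof (rule G[of s])
      show "t \<le> s" "s \<le> T" using s by auto
      have "\<theta> s \<le> \<Lambda> s" using bnd s t by auto
      then show "min (\<theta> s) (INF v\<in>{t..s}. \<psi> v) \<le> \<Lambda> s" by simp
      show "\<forall>v\<in>{t..s}. min (\<theta> s) (INF v\<in>{t..s}. \<psi> v) \<le> \<psi> v"
        using INFle[of t s] t s by force
    qed
  qed
  have le: "\<Lambda> t \<le> max (min (max (\<theta> T) 0) (INF v\<in>{t..T}. \<psi> v))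
                    (SUP s\<in>{t..T}. min (\<theta> s) (INF v\<in>{t..s}. \<psi> v))"
  proof (cases "\<forall>v\<in>{t..T}. \<theta> v < \<Lambda> v")
    case True
    have up: "\<Lambda> t \<le> \<Lambda> v" if "v \<in> {t..T}" for v
      using HUp[rule_format, of t v] True that t by auto
    have "\<Lambda> t \<le> (INF v\<in>{t..T}. \<psi> v)"
    proof (rule cINF_greatest)
      show "{t..T} \<noteq> {}" using t by simp
      fix v assume v: "v \<in> {t..T}"
      show "\<Lambda> t \<le> \<psi> v" using up[OF v] bnd[rule_format, of v] v t by auto
    qed
    moreover have "\<Lambda> t \<le> 0" using up[of T] LT t by simp
    moreover have "max (\<theta> T) 0 = 0" using thT by simp
    ultimately show ?thesis by simp
  next
    case False
    define S where "S = {t..T} \<inter> (\<lambda>v. \<Lambda> v - \<theta> v) -` {..0}"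
    have cS: "closed S" unfolding S_def
      by (rule continuous_closed_preimage[OF continuous_on_subset[OF continuous_on_diff[OF cL cT]]]) (use t in auto)
    have neS: "S \<noteq> {}" using False bnd t unfolding S_def by (force simp: not_less)
    have bS: "bdd_below S" unfolding S_def by (auto simp: bdd_below_def)
    define \<rho> where "\<rho> = Inf S"
    have rhoS: "\<rho> \<in> S" using closed_contains_Inf[OF neS bS cS] unfolding \<rho>_def .
    have rho: "t \<le> \<rho>" "\<rho> \<le> T" "\<Lambda> \<rho> \<le> \<theta> \<rho>" using rhoS unfolding S_def by auto
    have below: "\<theta> v < \<Lambda> v" if v: "v \<in> {t..<\<rho>}" for v
    proof -
      have "v \<notin> S" using v cInf_lower[OF _ bS, of v] unfolding \<rho>_def by force
      then show ?thesis using v rho unfolding S_def by auto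
    qed
    have up: "\<Lambda> t \<le> \<Lambda> v" if "v \<in> {t..<\<rho>}" for v
      using HUp[rule_format, of t v] below that t rho by auto
    have Lrho: "\<Lambda> t \<le> \<Lambda> \<rho>" by (rule MUh) (use t rho below in auto)
    have "\<Lambda> t \<le> (INF v\<in>{t..\<rho>}. \<psi> v)"
    proof (rule cINF_greatest)
      show "{t..\<rho>} \<noteq> {}" using rho by simp
      fix v assume v: "v \<in> {t..\<rho>}"
      show "\<Lambda> t \<le> \<psi> v"
      proof (cases "v = \<rho>")
        case True then show ?thesis using Lrho bnd[rule_format, of \<rho>] rho t by auto
      next
        case False then show ?thesis using up[of v] v bnd[rule_format, of v] rho t by auto
      qed
    qed
    moreover have "\<Lambda> t \<le> \<theta> \<rho>" using Lrho rho by simp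
    ultimately have "\<Lambda> t \<le> min (\<theta> \<rho>) (INF v\<in>{t..\<rho>}. \<psi> v)" by simp
    also have "\<dots> \<le> (SUP s\<in>{t..T}. min (\<theta> s) (INF v\<in>{t..s}. \<psi> v))"
      by (rule cSUP_upper[OF _ bddS]) (use rho in auto)
    finally show ?thesis by simp
  qed
  show ?thesis using le ge1 ge2 by simp
qed


lemma cont_from_modulus:
  fixes S :: "real \<Rightarrow> real"
  assumes H: "\<forall>e>0. \<exists>d>0. \<forall>x\<in>{p..q}. \<forall>y\<in>{p..q}. x \<le> y \<and> y - x < d \<longrightarrow> \<bar>S x - S y\<bar> < e"
  shows "continuous_on {p..q} S"
  unfolding continuous_on_iff
proof (intro ballI allI impI)
  fix x e assume x: "x \<in> {p..q}" and e: "(e::real) > 0"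
  obtain d where d: "d > 0" and dH: "\<forall>x\<in>{p..q}. \<forall>y\<in>{p..q}. x \<le> y \<and> y - x < d \<longrightarrow> \<bar>S x - S y\<bar> < e"
    using H e by blast
  show "\<exists>d>0. \<forall>x'\<in>{p..q}. dist x' x < d \<longrightarrow> dist (S x') (S x) < e"
  proof (intro exI[of _ d] conjI d ballI impI)
    fix x' assume x': "x' \<in> {p..q}" and dx: "dist x' x < d"
    show "dist (S x') (S x) < e"
    proof (cases "x' \<le> x")
      case True
      then show ?thesis using dH x x' dx by (auto simp: dist_real_def)
    next
      case False
      then have "\<bar>S x - S x'\<bar> < e" using dH x x' dx by (auto simp: dist_real_def)
      then show ?thesis by (simp add: dist_real_def abs_minus_commute)
    qed
  qed
qed

lemma cell_up:
  fixes h :: "real \<Rightarrow> real"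
  assumes ch: "continuous_on {p..q} h" and pq: "p \<le> q" and lam: "h q \<le> l0"
    and PhiD: "\<And>v. \<Phi> v = max l0 (Sup (h ` {v..q}))"
  shows "\<Phi> q = l0" "continuous_on {p..q} \<Phi>" "\<forall>v\<in>{p..q}. h v \<le> \<Phi> v"
    "\<forall>v\<in>{p..q}. \<exists>w\<in>{v..q}. \<Phi> v = max l0 (h w)"
    "\<forall>x y. p \<le> x \<and> x \<le> y \<and> y \<le> q \<longrightarrow> \<Phi> y \<le> \<Phi> x"
    "\<forall>x y. p \<le> x \<and> x \<le> y \<and> y \<le> q \<and> \<Phi> y < \<Phi> x \<longrightarrow> (\<exists>w\<in>{x..y}. \<Phi> w = h w)"
proof -
  define S where "S v = Sup (h ` {v..q})" for v
  have PhiS: "\<Phi> v = max l0 (S v)" for v unfolding PhiD S_def by simp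
  have att: "\<exists>w\<in>{v..q}. S v = h w \<and> (\<forall>w'\<in>{v..q}. h w' \<le> h w)" if v: "v \<in> {p..q}" for v
  proof -
    have "\<exists>w\<in>{v..q}. \<forall>w'\<in>{v..q}. h w' \<le> h w"
      by (rule continuous_attains_sup) (use v in \<open>auto intro: continuous_on_subset[OF ch]\<close>)
    then obtain w where w: "w \<in> {v..q}" "\<forall>w'\<in>{v..q}. h w' \<le> h w" by blast
    have "S v = h w" unfolding S_def by (rule cSup_eq_maximum) (use w in auto)
    then show ?thesis using w by blast
  qed
  have ge: "h w' \<le> S v" if "v \<in> {p..q}" "w' \<in> {v..q}" for v w'
    using att[OF that(1)] that(2) by auto
  have anti: "S y \<le> S x" if "p \<le> x" "x \<le> y" "y \<le> q" for x y
  proof -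
    have "y \<in> {p..q}" using that by auto
    then obtain w where w: "w \<in> {y..q}" "S y = h w" using att[of y] by blast
    then show ?thesis using ge[of x w] that by auto
  qed
  show "\<Phi> q = l0"
  proof -
    have "q \<in> {p..q}" using pq by auto
    then obtain w where "w \<in> {q..q}" "S q = h w" using att[of q] by blast
    then show ?thesis using lam PhiS by simp
  qed
  have ucf: "uniformly_continuous_on {p..q} h" by (rule compact_uniformly_continuous[OF ch compact_Icc])
  have cS: "continuous_on {p..q} S"
  proof (rule cont_from_modulus, intro allI impI)
    fix e :: real assume e: "e > 0"
    obtain d where d: "d > 0" and dH: "\<forall>x\<in>{p..q}. \<forall>x'\<in>{p..q}. dist x' x < d \<longrightarrow> dist (h x') (h x) < e"
      using ucf e unfolding uniformly_continuous_on_def by meson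
    show "\<exists>d>0. \<forall>x\<in>{p..q}. \<forall>y\<in>{p..q}. x \<le> y \<and> y - x < d \<longrightarrow> \<bar>S x - S y\<bar> < e"
    proof (intro exI[of _ d] conjI d ballI impI)
      fix x y assume x: "x \<in> {p..q}" and y: "y \<in> {p..q}" and xy: "x \<le> y \<and> y - x < d"
      have a: "S y \<le> S x" using anti[of x y] x y xy by auto
      obtain w where w: "w \<in> {x..q}" "S x = h w" using att[OF x] by auto
      have "S x < S y + e"
      proof (cases "y \<le> w")
        case True
        then have "h w \<le> S y" using ge[OF y, of w] w by auto
        then show ?thesis using w e by simp
      next
        case False
        then have "dist w y < d" using w xy by (auto simp: dist_real_def)
        then have "dist (h w) (h y) < e" using dH w y x by auto
        moreover have "h y \<le> S y" using ge[OF y, of y] y by auto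
        ultimately show ?thesis using w by (auto simp: dist_real_def)
      qed
      then show "\<bar>S x - S y\<bar> < e" using a by simp
    qed
  qed
  show "continuous_on {p..q} \<Phi>" unfolding PhiS by (intro continuous_intros cS)
  show "\<forall>v\<in>{p..q}. h v \<le> \<Phi> v" using ge PhiS by fastforce
  show "\<forall>v\<in>{p..q}. \<exists>w\<in>{v..q}. \<Phi> v = max l0 (h w)" using att PhiS by metis
  show "\<forall>x y. p \<le> x \<and> x \<le> y \<and> y \<le> q \<longrightarrow> \<Phi> y \<le> \<Phi> x" using anti PhiS by fastforce
  show "\<forall>x y. p \<le> x \<and> x \<le> y \<and> y \<le> q \<and> \<Phi> y < \<Phi> x \<longrightarrow> (\<exists>w\<in>{x..y}. \<Phi> w = h w)"
  proof (intro allI impI)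
    fix x y assume A: "p \<le> x \<and> x \<le> y \<and> y \<le> q \<and> \<Phi> y < \<Phi> x"
    have x: "x \<in> {p..q}" using A by auto
    have Sx: "\<Phi> x = S x" "l0 < S x" using A PhiS by (auto simp: max_def split: if_splits)
    have Syx: "S y < S x" using A PhiS Sx by (auto simp: max_def split: if_splits)
    obtain w where w: "w \<in> {x..q}" "S x = h w" using att[OF x] by auto
    have wy: "w \<le> y"
    proof (rule ccontr)
      assume "\<not> w \<le> y"
      then have "h w \<le> S y" using ge[of y w] A w by auto
      then show False using Syx w by simp
    qed
    have "S w \<le> S x" using anti[of x w] A w wy by auto
    moreover have "h w \<le> S w" using ge[of w w] A w wy by auto
    ultimately have "S w = h w" using w by simp
    then have "\<Phi> w = h w" using PhiS Sx w by simp
    then show "\<exists>w\<in>{x..y}. \<Phi> w = h w" using w wy by auto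
  qed
qed


definition DSol :: "(real \<Rightarrow> real) \<Rightarrow> (real \<Rightarrow> real) \<Rightarrow> real \<Rightarrow> real \<Rightarrow>
    (real \<Rightarrow> real) \<Rightarrow> (real \<Rightarrow> real) \<Rightarrow> (real \<Rightarrow> real) \<Rightarrow> bool" where
  "DSol \<psi> \<theta> T p \<Lambda> A B \<longleftrightarrow>
    continuous_on {p..T} \<Lambda> \<and> continuous_on {p..T} A \<and> continuous_on {p..T} B \<and>
    mono_on {p..T} A \<and> mono_on {p..T} B \<and>
    (\<forall>v\<in>{p..T}. \<theta> v \<le> \<Lambda> v \<and> \<Lambda> v \<le> \<psi> v) \<and> \<Lambda> T = 0 \<and> (\<forall>v\<in>{p..T}. \<Lambda> v = A v - B v) \<and>
    (\<forall>x y. p \<le> x \<and> x \<le> y \<and> y \<le> T \<and> A x < A y \<longrightarrow> (\<exists>w\<in>{x..y}. \<Lambda> w = \<psi> w)) \<and>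
    (\<forall>x y. p \<le> x \<and> x \<le> y \<and> y \<le> T \<and> B x < B y \<longrightarrow> (\<exists>w\<in>{x..y}. \<Lambda> w = \<theta> w))"

lemma DSol_flip:
  assumes "DSol \<psi> \<theta> T p \<Lambda> A B"
  shows "DSol (\<lambda>v. - \<theta> v) (\<lambda>v. - \<psi> v) T p (\<lambda>v. - \<Lambda> v) B A"
  unfolding DSol_def
proof (intro conjI)
  note S = assms[unfolded DSol_def]
  show "continuous_on {p..T} (\<lambda>v. - \<Lambda> v)" using S by (auto intro: continuous_intros)
  show "continuous_on {p..T} B" "continuous_on {p..T} A" "mono_on {p..T} B" "mono_on {p..T} A"
    using S by auto
  show "\<forall>v\<in>{p..T}. - \<psi> v \<le> - \<Lambda> v \<and> - \<Lambda> v \<le> - \<theta> v" using S by auto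
  show "- \<Lambda> T = 0" using S by auto
  show "\<forall>v\<in>{p..T}. - \<Lambda> v = B v - A v" using S by auto
  show "\<forall>x y. p \<le> x \<and> x \<le> y \<and> y \<le> T \<and> B x < B y \<longrightarrow> (\<exists>w\<in>{x..y}. - \<Lambda> w = - \<theta> w)"
  proof (intro allI impI)
    fix x y assume "p \<le> x \<and> x \<le> y \<and> y \<le> T \<and> B x < B y"
    then obtain w where "w \<in> {x..y}" "\<Lambda> w = \<theta> w" using S by blast
    then show "\<exists>w\<in>{x..y}. - \<Lambda> w = - \<theta> w" by auto
  qed
  show "\<forall>x y. p \<le> x \<and> x \<le> y \<and> y \<le> T \<and> A x < A y \<longrightarrow> (\<exists>w\<in>{x..y}. - \<Lambda> w = - \<psi> w)"
  proof (intro allI impI)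
    fix x y assume "p \<le> x \<and> x \<le> y \<and> y \<le> T \<and> A x < A y"
    then obtain w where "w \<in> {x..y}" "\<Lambda> w = \<psi> w" using S by blast
    then show "\<exists>w\<in>{x..y}. - \<Lambda> w = - \<psi> w" by auto
  qed
qed

lemma glue_cont:
  fixes f1 f2 :: "real \<Rightarrow> real"
  assumes "p \<le> q" "q \<le> T" "continuous_on {p..q} f1" "continuous_on {q..T} f2" "f1 q = f2 q"
  shows "continuous_on {p..T} (\<lambda>v. if v < q then f1 v else f2 v)"
proof -
  have e: "{p..T} = {p..q} \<union> {q..T}" using assms by auto
  have c1: "continuous_on {p..q} (\<lambda>v. if v < q then f1 v else f2 v)"
    by (rule continuous_on_cong[THEN iffD1, OF refl _ assms(3)]) (use assms in auto)
  have c2: "continuous_on {q..T} (\<lambda>v. if v < q then f1 v else f2 v)"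
    by (rule continuous_on_cong[THEN iffD1, OF refl _ assms(4)]) auto
  show ?thesis unfolding e by (rule continuous_on_closed_Un[OF _ _ c1 c2]) auto
qed

lemma ext_up:
  fixes \<psi> \<theta> :: "real \<Rightarrow> real"
  assumes sol: "DSol \<psi> \<theta> T q \<Lambda> A B" and pq: "p \<le> q" "q \<le> T"
    and cT: "continuous_on {p..q} \<theta>"
    and c1: "\<forall>v\<in>{p..q}. \<Lambda> q \<le> \<psi> v" and c2: "\<forall>v\<in>{p..q}. \<forall>w\<in>{p..q}. \<theta> w \<le> \<psi> v"
  shows "\<exists>\<Lambda>' A' B'. DSol \<psi> \<theta> T p \<Lambda>' A' B'"
proof -
  define l0 where "l0 = \<Lambda> q"
  have qT: "q \<in> {q..T}" using pq by auto
  have bq: "\<theta> q \<le> l0" using sol qT unfolding DSol_def l0_def by blast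
  define \<Phi> where "\<Phi> v = max l0 (Sup (\<theta> ` {v..q}))" for v
  note cell = cell_up[OF cT pq(1) bq, of \<Phi>, OF \<Phi>_def]
  define L' where "L' v = (if v < q then \<Phi> v else \<Lambda> v)" for v
  define A' where "A' v = (if v < q then A q else A v)" for v
  define B' where "B' v = (if v < q then B q + l0 - \<Phi> v else B v)" for v
  have S: "continuous_on {q..T} \<Lambda>" "continuous_on {q..T} A" "continuous_on {q..T} B"
    "mono_on {q..T} A" "mono_on {q..T} B"
    "\<forall>v\<in>{q..T}. \<theta> v \<le> \<Lambda> v \<and> \<Lambda> v \<le> \<psi> v" "\<Lambda> T = 0" "\<forall>v\<in>{q..T}. \<Lambda> v = A v - B v"
    "\<forall>x y. q \<le> x \<and> x \<le> y \<and> y \<le> T \<and> A x < A y \<longrightarrow> (\<exists>w\<in>{x..y}. \<Lambda> w = \<psi> w)"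
    "\<forall>x y. q \<le> x \<and> x \<le> y \<and> y \<le> T \<and> B x < B y \<longrightarrow> (\<exists>w\<in>{x..y}. \<Lambda> w = \<theta> w)"
    using sol unfolding DSol_def by auto
  have lq: "\<Lambda> q = A q - B q" using S(8) qT by blast
  have PhiL: "\<Phi> q = \<Lambda> q" using cell(1) l0_def by simp
  have Phige: "l0 \<le> \<Phi> v" for v unfolding \<Phi>_def by simp
  have "DSol \<psi> \<theta> T p L' A' B'"
    unfolding DSol_def
  proof (intro conjI)
    show "continuous_on {p..T} L'" unfolding L'_def
      by (rule glue_cont[OF pq cell(2) S(1) PhiL])
    show "continuous_on {p..T} A'" unfolding A'_def
      by (rule glue_cont[OF pq _ S(2)]) (auto intro: continuous_intros)
    show "continuous_on {p..T} B'" unfolding B'_def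
      by (rule glue_cont[OF pq _ S(3)]) (use cell(1) l0_def in \<open>auto intro: continuous_intros cell(2)\<close>)
    show "mono_on {p..T} A'"
    proof (rule mono_onI)
      fix x y assume xy: "x \<in> {p..T}" "y \<in> {p..T}" "x \<le> y"
      show "A' x \<le> A' y" unfolding A'_def using xy S(4) qT by (auto simp: mono_on_def)
    qed
    show "mono_on {p..T} B'"
    proof (rule mono_onI)
      fix x y assume xy: "x \<in> {p..T}" "y \<in> {p..T}" "x \<le> y"
      show "B' x \<le> B' y"
      proof (cases "y < q")
        case True
        then have "\<Phi> y \<le> \<Phi> x" using cell(5) xy by auto
        then show ?thesis unfolding B'_def using True xy by auto
      next
        case False
        then have "B q \<le> B y" using S(5) xy qT by (auto simp: mono_on_def)
        moreover have "\<not> x < q \<Longrightarrow> B x \<le> B y" using S(5) xy by (auto simp: mono_on_def)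
        ultimately show ?thesis unfolding B'_def using False Phige[of x] by auto
      qed
    qed
    show "\<forall>v\<in>{p..T}. \<theta> v \<le> L' v \<and> L' v \<le> \<psi> v"
    proof
      fix v assume v: "v \<in> {p..T}"
      show "\<theta> v \<le> L' v \<and> L' v \<le> \<psi> v"
      proof (cases "v < q")
        case True
        then have vin: "v \<in> {p..q}" using v by auto
        obtain w where w: "w \<in> {v..q}" "\<Phi> v = max l0 (\<theta> w)" using cell(4) vin by blast
        have "\<theta> w \<le> \<psi> v" using c2 vin w by auto
        moreover have "l0 \<le> \<psi> v" using c1 vin l0_def by auto
        moreover have "\<theta> v \<le> \<Phi> v" using cell(3) vin by blast
        ultimately show ?thesis unfolding L'_def using True w by auto
      next
        case False
        then show ?thesis unfolding L'_def using S(6) v by auto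
      qed
    qed
    show "L' T = 0" unfolding L'_def using S(7) pq by auto
    show "\<forall>v\<in>{p..T}. L' v = A' v - B' v"
      unfolding L'_def A'_def B'_def using S(8) lq l0_def by auto
    show "\<forall>x y. p \<le> x \<and> x \<le> y \<and> y \<le> T \<and> A' x < A' y \<longrightarrow> (\<exists>w\<in>{x..y}. L' w = \<psi> w)"
    proof (intro allI impI)
      fix x y assume A: "p \<le> x \<and> x \<le> y \<and> y \<le> T \<and> A' x < A' y"
      have yq: "q \<le> y" using A unfolding A'_def by (auto split: if_splits)
      have "A (max x q) < A y" using A yq unfolding A'_def by (auto simp: max_def split: if_splits)
      moreover have "q \<le> max x q" "max x q \<le> y" "y \<le> T" using A yq by auto
      ultimately obtain w where w: "w \<in> {max x q..y}" "\<Lambda> w = \<psi> w" using S(9)[rule_format, of "max x q" y] by blast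
      then show "\<exists>w\<in>{x..y}. L' w = \<psi> w" unfolding L'_def by (intro bexI[of _ w]) auto
    qed
    show "\<forall>x y. p \<le> x \<and> x \<le> y \<and> y \<le> T \<and> B' x < B' y \<longrightarrow> (\<exists>w\<in>{x..y}. L' w = \<theta> w)"
    proof (intro allI impI)
      fix x y assume A: "p \<le> x \<and> x \<le> y \<and> y \<le> T \<and> B' x < B' y"
      show "\<exists>w\<in>{x..y}. L' w = \<theta> w"
      proof (cases "y < q")
        case True
        then have "\<Phi> y < \<Phi> x" using A unfolding B'_def by auto
        then obtain w where w: "w \<in> {x..y}" "\<Phi> w = \<theta> w" using cell(6)[rule_format, of x y] A True by auto
        then show ?thesis unfolding L'_def using True by (intro bexI[of _ w]) auto
      next
        case yq: False
        show ?thesis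
        proof (cases "q \<le> x")
          case True
          then have "B x < B y" using A unfolding B'_def by auto
          then obtain w where w: "w \<in> {x..y}" "\<Lambda> w = \<theta> w" using S(10)[rule_format, of x y] A True by auto
          then show ?thesis unfolding L'_def using True by (intro bexI[of _ w]) auto
        next
          case xq: False
          have BB: "B' x = B q + l0 - \<Phi> x" "B' y = B y" unfolding B'_def using xq yq by auto
          show ?thesis
          proof (cases "B q < B y")
            case True
            then obtain w where w: "w \<in> {q..y}" "\<Lambda> w = \<theta> w" using S(10)[rule_format, of q y] A yq pq by auto
            then show ?thesis unfolding L'_def using xq by (intro bexI[of _ w]) auto
          next
            case False
            have "B q \<le> B y" using S(5) yq A qT by (auto simp: mono_on_def)
            then have "B y = B q" using False by simp
            then have "\<Phi> q < \<Phi> x" using A BB cell(1) by simp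
            then obtain w where w: "w \<in> {x..q}" "\<Phi> w = \<theta> w" using cell(6)[rule_format, of x q] A xq pq by auto
            show ?thesis
            proof (cases "w < q")
              case True
              then show ?thesis unfolding L'_def using w yq by (intro bexI[of _ w]) auto
            next
              case False
              then have "w = q" using w by auto
              then show ?thesis unfolding L'_def using w yq xq PhiL by (intro bexI[of _ q]) auto
            qed
          qed
        qed
      qed
    qed
  qed
  then show ?thesis by blast
qed


lemma skor_exists:
  fixes \<psi> \<theta> :: "real \<Rightarrow> real"
  assumes T0: "0 \<le> T" and cP: "continuous_on {0..T} \<psi>" and cT: "continuous_on {0..T} \<theta>"
    and g: "g > 0" and gap: "\<forall>v\<in>{0..T}. \<theta> v + g \<le> \<psi> v"
    and endc: "\<theta> T \<le> 0" "0 \<le> \<psi> T"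
  shows "\<exists>\<Lambda> A B. DSol \<psi> \<theta> T 0 \<Lambda> A B"
proof -
  have g3: "g / 3 > 0" using g by simp
  obtain d1 where d1: "d1 > 0" and d1H: "\<forall>x\<in>{0..T}. \<forall>x'\<in>{0..T}. dist x' x < d1 \<longrightarrow> dist (\<psi> x') (\<psi> x) < g / 3"
    using compact_uniformly_continuous[OF cP compact_Icc] g3 unfolding uniformly_continuous_on_def by meson
  obtain d2 where d2: "d2 > 0" and d2H: "\<forall>x\<in>{0..T}. \<forall>x'\<in>{0..T}. dist x' x < d2 \<longrightarrow> dist (\<theta> x') (\<theta> x) < g / 3"
    using compact_uniformly_continuous[OF cT compact_Icc] g3 unfolding uniformly_continuous_on_def by meson
  define \<delta> where "\<delta> = min d1 d2"
  have d: "\<delta> > 0" unfolding \<delta>_def using d1 d2 by simp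
  have oscP: "\<bar>\<psi> x - \<psi> y\<bar> < g / 3" if "x \<in> {0..T}" "y \<in> {0..T}" "\<bar>x - y\<bar> < \<delta>" for x y
    using d1H that unfolding \<delta>_def by (auto simp: dist_real_def)
  have oscT: "\<bar>\<theta> x - \<theta> y\<bar> < g / 3" if "x \<in> {0..T}" "y \<in> {0..T}" "\<bar>x - y\<bar> < \<delta>" for x y
    using d2H that unfolding \<delta>_def by (auto simp: dist_real_def)
  define P where "P n = max 0 (T - real n * (\<delta> / 2))" for n :: nat
  have step: "\<exists>\<Lambda> A B. DSol \<psi> \<theta> T (P n) \<Lambda> A B" for n
  proof (induction n)
    case 0
    have "DSol \<psi> \<theta> T T (\<lambda>_. 0) (\<lambda>_. 0) (\<lambda>_. 0)"
      unfolding DSol_def using endc by (auto intro: continuous_intros simp: mono_on_def)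
    moreover have "P 0 = T" unfolding P_def using T0 by simp
    ultimately show ?case by auto
  next
    case (Suc n)
    then obtain \<Lambda> A B where sol: "DSol \<psi> \<theta> T (P n) \<Lambda> A B" by blast
    define q where "q = P n"
    define p where "p = P (Suc n)"
    have pq: "0 \<le> p" "p \<le> q" "q \<le> T" "q - p \<le> \<delta> / 2"
      unfolding p_def q_def P_def using T0 d by (auto simp: algebra_simps max_def)
    have close: "\<bar>x - y\<bar> < \<delta>" if "x \<in> {p..q}" "y \<in> {p..q}" for x y
      using that pq d by auto
    have sub: "{p..q} \<subseteq> {0..T}" using pq by auto
    have qT: "q \<in> {q..T}" using pq by auto
    have bq: "\<theta> q \<le> \<Lambda> q" "\<Lambda> q \<le> \<psi> q" using sol qT unfolding DSol_def q_def by auto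
    have qin: "q \<in> {p..q}" using pq by auto
    show ?case
    proof (cases "\<Lambda> q \<le> \<theta> q + g / 3")
      case True
      have c1: "\<forall>v\<in>{p..q}. \<Lambda> q \<le> \<psi> v"
      proof
        fix v assume v: "v \<in> {p..q}"
        have "\<bar>\<psi> v - \<psi> q\<bar> < g / 3" using oscP[of v q] close[OF v qin] v qin sub by auto
        moreover have "\<theta> q + g \<le> \<psi> q" using gap qin sub by auto
        ultimately show "\<Lambda> q \<le> \<psi> v" using True by linarith
      qed
      have c2: "\<forall>v\<in>{p..q}. \<forall>w\<in>{p..q}. \<theta> w \<le> \<psi> v"
      proof (intro ballI)
        fix v w assume v: "v \<in> {p..q}" and w: "w \<in> {p..q}"
        have "\<bar>\<psi> v - \<psi> w\<bar> < g / 3" using oscP[of v w] close[OF v w] v w sub by auto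
        moreover have "\<theta> w + g \<le> \<psi> w" using gap w sub by auto
        ultimately show "\<theta> w \<le> \<psi> v" using g by linarith
      qed
      have "\<exists>\<Lambda>' A' B'. DSol \<psi> \<theta> T p \<Lambda>' A' B'"
        by (rule ext_up[OF sol[folded q_def] pq(2,3) continuous_on_subset[OF cT sub] c1 c2])
      then show ?thesis unfolding p_def by blast
    next
      case False
      have solF: "DSol (\<lambda>v. - \<theta> v) (\<lambda>v. - \<psi> v) T q (\<lambda>v. - \<Lambda> v) B A"
        using DSol_flip[OF sol] unfolding q_def .
      have c1: "\<forall>v\<in>{p..q}. - \<Lambda> q \<le> - \<theta> v"
      proof
        fix v assume v: "v \<in> {p..q}"
        have "\<bar>\<theta> v - \<theta> q\<bar> < g / 3" using oscT[of v q] close[OF v qin] v qin sub by auto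
        then show "- \<Lambda> q \<le> - \<theta> v" using False by linarith
      qed
      have c2: "\<forall>v\<in>{p..q}. \<forall>w\<in>{p..q}. - \<psi> w \<le> - \<theta> v"
      proof (intro ballI)
        fix v w assume v: "v \<in> {p..q}" and w: "w \<in> {p..q}"
        have "\<bar>\<psi> v - \<psi> w\<bar> < g / 3" using oscP[of v w] close[OF v w] v w sub by auto
        moreover have "\<theta> v + g \<le> \<psi> v" using gap v sub by auto
        ultimately show "- \<psi> w \<le> - \<theta> v" using g by linarith
      qed
      have cM: "continuous_on {p..q} (\<lambda>v. - \<psi> v)"
        by (intro continuous_intros continuous_on_subset[OF cP sub])
      obtain L' A' B' where "DSol (\<lambda>v. - \<theta> v) (\<lambda>v. - \<psi> v) T p L' A' B'"
        using ext_up[OF solF pq(2,3) cM c1 c2] by blast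
      from DSol_flip[OF this] have "DSol \<psi> \<theta> T p (\<lambda>v. - L' v) B' A'" by simp
      then show ?thesis unfolding p_def by blast
    qed
  qed
  obtain n :: nat where n: "2 * T / \<delta> < n" using reals_Archimedean2 by blast
  have "T - real n * (\<delta> / 2) \<le> 0"
  proof -
    have "2 * T < n * \<delta>" using n d by (simp add: divide_less_eq)
    then show ?thesis by simp
  qed
  then have "P n = 0" unfolding P_def by simp
  then show ?thesis using step[of n] by simp
qed


locale bsp_setting =
  fixes T :: real
    and LG :: "real \<Rightarrow> ('w \<Rightarrow> real) set"
    and E :: "('w \<Rightarrow> real) \<Rightarrow> real"
    and hbar :: "real \<Rightarrow> 'w \<Rightarrow> real \<Rightarrow> real"
    and l u :: "real \<Rightarrow> real"
    and Ybar :: "real \<Rightarrow> 'w \<Rightarrow> real"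
    and C_h c_lo c_up :: real
  assumes T_pos: "0 < T"
    and frame: "G_framework T LG E"
    and l_cont: "continuous_on {0..T} l" and l_bdd: "bounded (l ` {0..T})"
    and u_cont: "continuous_on {0..T} u" and u_bdd: "bounded (u ` {0..T})"
    and gap: "0 < (INF t\<in>{0..T}. u t - l t)"
    and h_unif: "\<forall>\<epsilon>>0. \<exists>\<delta>>0. \<forall>w t t' y y'. t \<in> {0..T} \<and> t' \<in> {0..T} \<and>
                   \<bar>t - t'\<bar> < \<delta> \<and> \<bar>y - y'\<bar> < \<delta> \<longrightarrow> \<bar>hbar t w y - hbar t' w y'\<bar> < \<epsilon>"
    and h_mono: "\<forall>t\<in>{0..T}. \<forall>w. strict_mono (hbar t w)"
    and h_LG: "\<forall>t\<in>{0..T}. \<forall>y. (\<lambda>w. hbar t w y) \<in> LG T"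
    and h_growth: "0 < C_h" "\<forall>t\<in>{0..T}. \<forall>w y. \<bar>hbar t w y\<bar> \<le> C_h * (1 + \<bar>y\<bar>)"
    and h_lip: "0 < c_lo" "c_lo \<le> c_up"
      "\<forall>t\<in>{0..T}. \<forall>w y y'. c_lo * \<bar>y - y'\<bar> \<le> \<bar>hbar t w y - hbar t w y'\<bar> \<and>
                            \<bar>hbar t w y - hbar t w y'\<bar> \<le> c_up * \<bar>y - y'\<bar>"
    and Ybar_C1G: "C1G T LG E Ybar"
    and term_cond: "l T \<le> E (\<lambda>w. hbar T w (Ybar T w))" "E (\<lambda>w. hbar T w (Ybar T w)) \<le> u T"
begin

abbreviation "H \<equiv> LG T"

lemma SE_v: "v \<in> {0..T} \<Longrightarrow> sublinear_expectation (LG v) E"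
  using frame unfolding G_framework_def by blast

lemma SE: "sublinear_expectation H E"
  using SE_v T_pos by simp

lemma LG_sub: "v \<in> {0..T} \<Longrightarrow> LG v \<subseteq> H"
  using frame unfolding G_framework_def by auto

lemma H_const[simp, intro]: "(\<lambda>_. c) \<in> H"
  using SE unfolding sublinear_expectation_def by blast
lemma H_add[intro]: "X \<in> H \<Longrightarrow> Y \<in> H \<Longrightarrow> (\<lambda>w. X w + Y w) \<in> H"
  using SE unfolding sublinear_expectation_def by blast
lemma H_scale[intro]: "X \<in> H \<Longrightarrow> (\<lambda>w. a * X w) \<in> H"
  using SE unfolding sublinear_expectation_def by blast
lemma H_abs[intro]: "X \<in> H \<Longrightarrow> (\<lambda>w. \<bar>X w\<bar>) \<in> H"
  using SE unfolding sublinear_expectation_def by blast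
lemma H_diff[intro]: "X \<in> H \<Longrightarrow> Y \<in> H \<Longrightarrow> (\<lambda>w. X w - Y w) \<in> H"
proof -
  assume "X \<in> H" "Y \<in> H"
  then have "(\<lambda>w. X w + (-1) * Y w) \<in> H" using H_add H_scale by blast
  then show ?thesis by simp
qed
lemma H_absdiff[intro]: "X \<in> H \<Longrightarrow> Y \<in> H \<Longrightarrow> (\<lambda>w. \<bar>X w - Y w\<bar>) \<in> H"
  by (rule H_abs[OF H_diff])
lemma H_addc[intro]: "X \<in> H \<Longrightarrow> (\<lambda>w. X w + c) \<in> H"
  using H_add[of X "\<lambda>_. c"] by simp
lemma E_mono: "X \<in> H \<Longrightarrow> Y \<in> H \<Longrightarrow> (\<And>w. X w \<le> Y w) \<Longrightarrow> E X \<le> E Y"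
  using SE unfolding sublinear_expectation_def by blast
lemma E_const[simp]: "E (\<lambda>_. c) = c"
  using SE unfolding sublinear_expectation_def by blast
lemma E_sub: "X \<in> H \<Longrightarrow> Y \<in> H \<Longrightarrow> E (\<lambda>w. X w + Y w) \<le> E X + E Y"
  using SE unfolding sublinear_expectation_def by blast
lemma E_hom: "X \<in> H \<Longrightarrow> a \<ge> 0 \<Longrightarrow> E (\<lambda>w. a * X w) = a * E X"
  using SE unfolding sublinear_expectation_def by blast

lemma E_trans: assumes "X \<in> H" shows "E (\<lambda>w. X w + c) = E X + c"
proof -
  have a: "E (\<lambda>w. X w + c) \<le> E X + c" using E_sub[OF assms H_const[of c]] by simp
  have "E (\<lambda>w. (X w + c) + (- c)) \<le> E (\<lambda>w. X w + c) + E (\<lambda>_. - c)"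
    by (rule E_sub[OF H_addc[OF assms] H_const])
  moreover have "(\<lambda>w. (X w + c) + (- c)) = X" by simp
  ultimately have "E X \<le> E (\<lambda>w. X w + c) - c" by simp
  then show ?thesis using a by simp
qed

lemma E_diff_le: assumes "X \<in> H" "Y \<in> H" shows "E X - E Y \<le> E (\<lambda>w. \<bar>X w - Y w\<bar>)"
proof -
  have "E X = E (\<lambda>w. Y w + (X w - Y w))" by simp
  also have "\<dots> \<le> E Y + E (\<lambda>w. X w - Y w)" using E_sub assms H_diff by blast
  also have "E (\<lambda>w. X w - Y w) \<le> E (\<lambda>w. \<bar>X w - Y w\<bar>)"
    using assms by (intro E_mono) auto
  finally show ?thesis by simp
qed

lemma E_abs_diff: assumes "X \<in> H" "Y \<in> H" shows "\<bar>E X - E Y\<bar> \<le> E (\<lambda>w. \<bar>X w - Y w\<bar>)"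
proof -
  have "E Y - E X \<le> E (\<lambda>w. \<bar>Y w - X w\<bar>)" by (rule E_diff_le[OF assms(2,1)])
  also have "(\<lambda>w. \<bar>Y w - X w\<bar>) = (\<lambda>w. \<bar>X w - Y w\<bar>)" by (simp add: abs_minus_commute)
  finally show ?thesis using E_diff_le[OF assms] by simp
qed

lemma E_bound:
  assumes "X \<in> H" "Y \<in> H" "U \<in> H" "V \<in> H" "c \<ge> 0"
    and "\<And>w. \<bar>X w - Y w\<bar> \<le> e + c * \<bar>U w - V w\<bar>"
  shows "\<bar>E X - E Y\<bar> \<le> e + c * E (\<lambda>w. \<bar>U w - V w\<bar>)"
proof -
  have "\<bar>E X - E Y\<bar> \<le> E (\<lambda>w. \<bar>X w - Y w\<bar>)" by (rule E_abs_diff[OF assms(1,2)])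
  also have "\<dots> \<le> E (\<lambda>w. c * \<bar>U w - V w\<bar> + e)"
  proof (rule E_mono)
    show "(\<lambda>w. \<bar>X w - Y w\<bar>) \<in> H" using H_absdiff assms by blast
    show "(\<lambda>w. c * \<bar>U w - V w\<bar> + e) \<in> H" by (rule H_addc[OF H_scale[OF H_absdiff[OF assms(3,4)]]])
    fix w show "\<bar>X w - Y w\<bar> \<le> c * \<bar>U w - V w\<bar> + e" using assms(6)[of w] by simp
  qed
  also have "\<dots> = E (\<lambda>w. c * \<bar>U w - V w\<bar>) + e"
  proof (rule E_trans)
    show "(\<lambda>w. c * \<bar>U w - V w\<bar>) \<in> H" by (rule H_scale[OF H_absdiff[OF assms(3,4)]])
  qed
  also have "E (\<lambda>w. c * \<bar>U w - V w\<bar>) = c * E (\<lambda>w. \<bar>U w - V w\<bar>)"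
    using assms by (intro E_hom H_absdiff) auto
  finally show ?thesis by simp
qed

lemma E_abs_shift: assumes "X \<in> H" shows "E (\<lambda>w. \<bar>X w + c\<bar>) \<le> E (\<lambda>w. \<bar>X w\<bar>) + \<bar>c\<bar>"
proof -
  have "E (\<lambda>w. \<bar>X w + c\<bar>) \<le> E (\<lambda>w. \<bar>X w\<bar> + \<bar>c\<bar>)"
    using assms by (intro E_mono) (auto simp: abs_triangle_ineq)
  also have "\<dots> = E (\<lambda>w. \<bar>X w\<bar>) + \<bar>c\<bar>" using assms by (intro E_trans) auto
  finally show ?thesis .
qed

lemma H_comp:
  assumes "X \<in> H" "\<forall>y. (\<lambda>w. f w y) \<in> H" "\<exists>c. \<forall>w y y'. \<bar>f w y - f w y'\<bar> \<le> c * \<bar>y - y'\<bar>"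
  shows "(\<lambda>w. f w (X w)) \<in> H"
  using frame assms unfolding G_framework_def by blast

lemma h_lip_t: "t \<in> {0..T} \<Longrightarrow> \<bar>hbar t w y - hbar t w y'\<bar> \<le> c_up * \<bar>y - y'\<bar>"
  using h_lip(3) by blast

lemma H_hbar: assumes "t \<in> {0..T}" "X \<in> H" shows "(\<lambda>w. hbar t w (a + X w - b)) \<in> H"
proof -
  have "(\<lambda>w. (\<lambda>w y. hbar t w (a + y - b)) w (X w)) \<in> H"
  proof (rule H_comp[OF assms(2)])
    show "\<forall>y. (\<lambda>w. hbar t w (a + y - b)) \<in> H" using h_LG assms(1) by blast
    show "\<exists>c. \<forall>w y y'. \<bar>hbar t w (a + y - b) - hbar t w (a + y' - b)\<bar> \<le> c * \<bar>y - y'\<bar>"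
    proof (rule exI[of _ c_up], intro allI)
      fix w y y'
      show "\<bar>hbar t w (a + y - b) - hbar t w (a + y' - b)\<bar> \<le> c_up * \<bar>y - y'\<bar>"
        using h_lip_t[OF assms(1), of w "a + y - b" "a + y' - b"] by simp
    qed
  qed
  then show ?thesis by simp
qed

lemma H_hbar': assumes "t \<in> {0..T}" "X \<in> H" shows "(\<lambda>w. hbar t w (X w)) \<in> H"
  using H_hbar[OF assms, of 0 0] by simp

lemma h_inc:
  assumes t: "t \<in> {0..T}" and yy: "y \<le> y'"
  shows "c_lo * (y' - y) \<le> hbar t w y' - hbar t w y" "hbar t w y' - hbar t w y \<le> c_up * (y' - y)"
proof -
  have le: "hbar t w y \<le> hbar t w y'"
    using h_mono t yy by (metis order_le_less strict_mono_less)
  have "c_lo * \<bar>y' - y\<bar> \<le> \<bar>hbar t w y' - hbar t w y\<bar> \<and> \<bar>hbar t w y' - hbar t w y\<bar> \<le> c_up * \<bar>y' - y\<bar>"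
    using h_lip(3) t by blast
  then show "c_lo * (y' - y) \<le> hbar t w y' - hbar t w y" "hbar t w y' - hbar t w y \<le> c_up * (y' - y)"
    using le yy by auto
qed

abbreviation "Hb t x X \<equiv> Hbar E hbar t x X"

lemma Hb_inc:
  assumes t: "t \<in> {0..T}" and X: "X \<in> H" and xx: "x \<le> x'"
  shows "c_lo * (x' - x) \<le> Hb t x' X - Hb t x X" "Hb t x' X - Hb t x X \<le> c_up * (x' - x)"
proof -
  let ?Z = "\<lambda>x w. hbar t w (x + X w - E X)"
  have Z: "?Z x \<in> H" "?Z x' \<in> H" using H_hbar[OF t X] by auto
  have "E (\<lambda>w. ?Z x w + c_lo * (x' - x)) \<le> E (?Z x')"
  proof (rule E_mono)
    show "(\<lambda>w. ?Z x w + c_lo * (x' - x)) \<in> H" by (rule H_addc[OF Z(1)])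
    show "?Z x' \<in> H" by (rule Z)
    fix w show "?Z x w + c_lo * (x' - x) \<le> ?Z x' w" using h_inc(1)[OF t, of "x + X w - E X" "x' + X w - E X" w] xx by simp
  qed
  then show "c_lo * (x' - x) \<le> Hb t x' X - Hb t x X" unfolding Hbar_def using E_trans[OF Z(1)] by simp
  have "E (?Z x') \<le> E (\<lambda>w. ?Z x w + c_up * (x' - x))"
  proof (rule E_mono)
    show "(\<lambda>w. ?Z x w + c_up * (x' - x)) \<in> H" by (rule H_addc[OF Z(1)])
    show "?Z x' \<in> H" by (rule Z)
    fix w show "?Z x' w \<le> ?Z x w + c_up * (x' - x)" using h_inc(2)[OF t, of "x + X w - E X" "x' + X w - E X" w] xx by simp
  qed
  then show "Hb t x' X - Hb t x X \<le> c_up * (x' - x)" unfolding Hbar_def using E_trans[OF Z(1)] by simp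
qed

lemma Hb_strict: assumes "t \<in> {0..T}" "X \<in> H" "x < x'" shows "Hb t x X < Hb t x' X"
  using Hb_inc(1)[OF assms(1,2), of x x'] assms(3) h_lip(1) by (smt (verit) mult_pos_pos)

lemma Hb_le_iff: assumes "t \<in> {0..T}" "X \<in> H" shows "Hb t x X \<le> Hb t x' X \<longleftrightarrow> x \<le> x'"
  using Hb_strict[OF assms] by (metis not_le order_le_less)

lemma Hb_cont: assumes "t \<in> {0..T}" "X \<in> H" shows "continuous_on S (\<lambda>x. Hb t x X)"
  unfolding continuous_on_iff
proof (intro ballI allI impI)
  fix x e assume "x \<in> S" "(e::real) > 0"
  have cu: "c_up > 0" using h_lip by simp
  show "\<exists>d>0. \<forall>x'\<in>S. dist x' x < d \<longrightarrow> dist (Hb t x' X) (Hb t x X) < e"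
  proof (intro exI[of _ "e / c_up"] conjI ballI impI)
    show "e / c_up > 0" using \<open>e > 0\<close> cu by simp
    fix x' assume "x' \<in> S" "dist x' x < e / c_up"
    then have d: "\<bar>x' - x\<bar> < e / c_up" by (simp add: dist_real_def)
    have "\<bar>Hb t x' X - Hb t x X\<bar> \<le> c_up * \<bar>x' - x\<bar>"
    proof (cases "x \<le> x'")
      case True
      have "0 \<le> c_lo * (x' - x)" using h_lip(1) True by simp
      then show ?thesis using Hb_inc[OF assms True] True by (simp add: abs_le_iff)
    next
      case False
      then have F: "x' \<le> x" by simp
      have "0 \<le> c_lo * (x - x')" using h_lip(1) F by simp
      then show ?thesis using Hb_inc[OF assms F] F by (simp add: abs_le_iff)
    qed
    also have "\<dots> < e" using d cu by (simp add: field_simps)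
    finally show "dist (Hb t x' X) (Hb t x X) < e" by (simp add: dist_real_def)
  qed
qed

lemma Hinv_eq:
  assumes t: "t \<in> {0..T}" and X: "X \<in> H"
  shows "Hb t (Hinv E hbar t X c) X = c"
proof -
  define f where "f x = Hb t x X" for x
  define r where "r = \<bar>c - f 0\<bar> / c_lo"
  have r0: "r \<ge> 0" unfolding r_def using h_lip by simp
  have fa: "f (- r) \<le> c"
  proof -
    have "c_lo * (0 - (- r)) \<le> f 0 - f (- r)" unfolding f_def using Hb_inc(1)[OF t X, of "-r" 0] r0 by simp
    moreover have "c_lo * r = \<bar>c - f 0\<bar>" unfolding r_def using h_lip by simp
    ultimately show ?thesis by simp
  qed
  have fb: "c \<le> f r"
  proof -
    have "c_lo * (r - 0) \<le> f r - f 0" unfolding f_def using Hb_inc(1)[OF t X, of 0 r] r0 by simp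
    moreover have "c_lo * r = \<bar>c - f 0\<bar>" unfolding r_def using h_lip by simp
    ultimately show ?thesis by simp
  qed
  obtain x where x: "f x = c" using IVT'[of f "-r" c r, OF fa fb] r0 Hb_cont[OF t X] unfolding f_def by auto
  have "Hinv E hbar t X c = x" unfolding Hinv_def
  proof (rule the_equality)
    show "Hb t x X = c" using x f_def by simp
    fix y assume "Hb t y X = c"
    then show "y = x" using x Hb_strict[OF t X, of x y] Hb_strict[OF t X, of y x] unfolding f_def
      by (metis less_irrefl linorder_neqE_linordered_idom)
  qed
  then show ?thesis using x f_def by simp
qed

end


context bsp_setting
begin

definition aY where "aY t = E (Ybar t)"
definition Lb where "Lb t = Lbar E hbar l t (Ybar t)"
definition Ub where "Ub t = Ubar E hbar u t (Ybar t)"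

lemma Ybar_H: "t \<in> {0..T} \<Longrightarrow> Ybar t \<in> H"
  using Ybar_C1G LG_sub unfolding C1G_def by blast

lemma Ybar_c: "\<forall>v\<in>{0..T}. \<forall>\<epsilon>>0. \<exists>\<delta>>0. \<forall>v'\<in>{0..T}. \<bar>v' - v\<bar> < \<delta> \<longrightarrow> E (\<lambda>w. \<bar>Ybar v' w - Ybar v w\<bar>) < \<epsilon>"
  using Ybar_C1G unfolding C1G_def by blast

lemma shift: assumes "t \<in> {0..T}" shows "E (\<lambda>w. hbar t w (Ybar t w + k)) = Hb t (aY t + k) (Ybar t)"
  unfolding Hbar_def aY_def by (simp add: algebra_simps)

lemma Hb_lower_abs: assumes "t \<in> {0..T}" "X \<in> H" shows "c_lo * \<bar>x - x'\<bar> \<le> \<bar>Hb t x X - Hb t x' X\<bar>"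
proof (cases "x' \<le> x")
  case True
  have "0 \<le> c_lo * (x - x')" using h_lip(1) True by simp
  then show ?thesis using Hb_inc(1)[OF assms True] True by (simp add: abs_le_iff)
next
  case False
  then have F: "x \<le> x'" by simp
  have "0 \<le> c_lo * (x' - x)" using h_lip(1) F by simp
  then show ?thesis using Hb_inc(1)[OF assms F] F by (simp add: abs_le_iff)
qed

lemma Hinv_Y: "t \<in> {0..T} \<Longrightarrow> Hb t (Hinv E hbar t (Ybar t) c) (Ybar t) = c"
  using Hinv_eq Ybar_H by blast

lemma Lb_eq: "t \<in> {0..T} \<Longrightarrow> Hb t (Lb t) (Ybar t) = l t"
  unfolding Lb_def Lbar_def using Hinv_Y by blast
lemma Ub_eq: "t \<in> {0..T} \<Longrightarrow> Hb t (Ub t) (Ybar t) = u t"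
  unfolding Ub_def Ubar_def using Hinv_Y by blast

lemma l_le_iff: assumes t: "t \<in> {0..T}" shows "l t \<le> Hb t x (Ybar t) \<longleftrightarrow> Lb t \<le> x"
proof -
  have "l t \<le> Hb t x (Ybar t) \<longleftrightarrow> Hb t (Lb t) (Ybar t) \<le> Hb t x (Ybar t)" using Lb_eq[OF t] by simp
  also have "\<dots> \<longleftrightarrow> Lb t \<le> x" by (rule Hb_le_iff[OF t Ybar_H[OF t]])
  finally show ?thesis .
qed
lemma u_ge_iff: assumes t: "t \<in> {0..T}" shows "Hb t x (Ybar t) \<le> u t \<longleftrightarrow> x \<le> Ub t"
proof -
  have "Hb t x (Ybar t) \<le> u t \<longleftrightarrow> Hb t x (Ybar t) \<le> Hb t (Ub t) (Ybar t)" using Ub_eq[OF t] by simp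
  also have "\<dots> \<longleftrightarrow> x \<le> Ub t" by (rule Hb_le_iff[OF t Ybar_H[OF t]])
  finally show ?thesis .
qed
lemma l_eq_iff: assumes t: "t \<in> {0..T}" shows "Hb t x (Ybar t) = l t \<longleftrightarrow> x = Lb t"
proof -
  have "Hb t x (Ybar t) = l t \<longleftrightarrow> Hb t x (Ybar t) = Hb t (Lb t) (Ybar t)" using Lb_eq[OF t] by simp
  also have "\<dots> \<longleftrightarrow> x = Lb t"
    using Hb_le_iff[OF t Ybar_H[OF t], of x "Lb t"] Hb_le_iff[OF t Ybar_H[OF t], of "Lb t" x] by auto
  finally show ?thesis .
qed
lemma u_eq_iff: assumes t: "t \<in> {0..T}" shows "Hb t x (Ybar t) = u t \<longleftrightarrow> x = Ub t"
proof -
  have "Hb t x (Ybar t) = u t \<longleftrightarrow> Hb t x (Ybar t) = Hb t (Ub t) (Ybar t)" using Ub_eq[OF t] by simp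
  also have "\<dots> \<longleftrightarrow> x = Ub t"
    using Hb_le_iff[OF t Ybar_H[OF t], of x "Ub t"] Hb_le_iff[OF t Ybar_H[OF t], of "Ub t" x] by auto
  finally show ?thesis .
qed

lemma cont_Eh:
  assumes ZH: "\<forall>v\<in>{0..T}. Z v \<in> H"
    and Zc: "\<forall>v\<in>{0..T}. \<forall>e>0. \<exists>d>0. \<forall>v'\<in>{0..T}. \<bar>v' - v\<bar> < d \<longrightarrow> E (\<lambda>w. \<bar>Z v' w - Z v w\<bar>) < e"
  shows "continuous_on {0..T} (\<lambda>v. E (\<lambda>w. hbar v w (Z v w)))"
  unfolding continuous_on_iff
proof (intro ballI allI impI)
  fix v e assume v: "v \<in> {0..T}" and e: "(e::real) > 0"
  have cu: "c_up > 0" using h_lip by simp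
  obtain d1 where d1: "d1 > 0" and d1H: "\<forall>w t t' y y'. t \<in> {0..T} \<and> t' \<in> {0..T} \<and>
                   \<bar>t - t'\<bar> < d1 \<and> \<bar>y - y'\<bar> < d1 \<longrightarrow> \<bar>hbar t w y - hbar t' w y'\<bar> < e / 2"
    using h_unif[rule_format, of "e / 2"] e by auto
  have e2: "e / (2 * (c_up + 1)) > 0" using e cu by simp
  obtain d2 where d2: "d2 > 0" and d2H: "\<forall>v'\<in>{0..T}. \<bar>v' - v\<bar> < d2 \<longrightarrow> E (\<lambda>w. \<bar>Z v' w - Z v w\<bar>) < e / (2 * (c_up + 1))"
    using Zc v e2 by blast
  show "\<exists>d>0. \<forall>v'\<in>{0..T}. dist v' v < d \<longrightarrow> dist (E (\<lambda>w. hbar v' w (Z v' w))) (E (\<lambda>w. hbar v w (Z v w))) < e"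
  proof (intro exI[of _ "min d1 d2"] conjI ballI impI)
    show "min d1 d2 > 0" using d1 d2 by simp
    fix v' assume v': "v' \<in> {0..T}" and dv: "dist v' v < min d1 d2"
    have pw: "\<bar>hbar v' w (Z v' w) - hbar v w (Z v w)\<bar> \<le> e / 2 + c_up * \<bar>Z v' w - Z v w\<bar>" for w
    proof -
      have "\<bar>hbar v' w (Z v' w) - hbar v w (Z v' w)\<bar> < e / 2"
        using d1H[rule_format, of v' v "Z v' w" "Z v' w" w] v v' dv d1 by (auto simp: dist_real_def)
      moreover have "\<bar>hbar v w (Z v' w) - hbar v w (Z v w)\<bar> \<le> c_up * \<bar>Z v' w - Z v w\<bar>"
        by (rule h_lip_t[OF v])
      ultimately show ?thesis by linarith
    qed
    have m1: "(\<lambda>w. hbar v' w (Z v' w)) \<in> H" by (rule H_hbar'[OF v']) (use ZH v' in blast)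
    have m2: "(\<lambda>w. hbar v w (Z v w)) \<in> H" by (rule H_hbar'[OF v]) (use ZH v in blast)
    have "\<bar>E (\<lambda>w. hbar v' w (Z v' w)) - E (\<lambda>w. hbar v w (Z v w))\<bar> \<le> e / 2 + c_up * E (\<lambda>w. \<bar>Z v' w - Z v w\<bar>)"
      by (rule E_bound[OF m1 m2, of "Z v'" "Z v"]) (use ZH v v' cu pw in auto)
    also have "c_up * E (\<lambda>w. \<bar>Z v' w - Z v w\<bar>) \<le> c_up * (e / (2 * (c_up + 1)))"
      using d2H v' dv cu by (intro mult_left_mono) (auto simp: dist_real_def)
    also have "c_up * (e / (2 * (c_up + 1))) < e / 2"
    proof -
      have "c_up * (e / (2 * (c_up + 1))) = (e / 2) * (c_up / (c_up + 1))" by (simp add: field_simps)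
      also have "\<dots> < (e / 2) * 1" using e cu by (intro mult_strict_left_mono) auto
      finally show ?thesis by simp
    qed
    finally show "dist (E (\<lambda>w. hbar v' w (Z v' w))) (E (\<lambda>w. hbar v w (Z v w))) < e"
      by (simp add: dist_real_def)
  qed
qed

lemma aY_diff: "v \<in> {0..T} \<Longrightarrow> v' \<in> {0..T} \<Longrightarrow> \<bar>aY v' - aY v\<bar> \<le> E (\<lambda>w. \<bar>Ybar v' w - Ybar v w\<bar>)"
  unfolding aY_def by (rule E_abs_diff) (auto intro: Ybar_H)

lemma aY_cont: "continuous_on {0..T} aY"
  unfolding continuous_on_iff
proof (intro ballI allI impI)
  fix v e assume v: "v \<in> {0..T}" and e: "(e::real) > 0"
  obtain d where d: "d > 0" "\<forall>v'\<in>{0..T}. \<bar>v' - v\<bar> < d \<longrightarrow> E (\<lambda>w. \<bar>Ybar v' w - Ybar v w\<bar>) < e"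
    using Ybar_c v e by blast
  show "\<exists>d>0. \<forall>x'\<in>{0..T}. dist x' v < d \<longrightarrow> dist (aY x') (aY v) < e"
    using d aY_diff[OF v] by (intro exI[of _ d]) (force simp: dist_real_def)
qed

lemma gg_cont: "continuous_on {0..T} (\<lambda>t. Hb t x (Ybar t))"
proof -
  define Z where "Z t = (\<lambda>w. x + Ybar t w - aY t)" for t
  have "continuous_on {0..T} (\<lambda>v. E (\<lambda>w. hbar v w (Z v w)))"
  proof (rule cont_Eh)
    show "\<forall>v\<in>{0..T}. Z v \<in> H"
    proof
      fix v assume "v \<in> {0..T}"
      then have "Ybar v \<in> H" by (rule Ybar_H)
      then have "(\<lambda>w. Ybar v w + (x - aY v)) \<in> H" by blast
      then show "Z v \<in> H" unfolding Z_def by (simp add: algebra_simps)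
    qed
    show "\<forall>v\<in>{0..T}. \<forall>e>0. \<exists>d>0. \<forall>v'\<in>{0..T}. \<bar>v' - v\<bar> < d \<longrightarrow> E (\<lambda>w. \<bar>Z v' w - Z v w\<bar>) < e"
    proof (intro ballI allI impI)
      fix v e assume v: "v \<in> {0..T}" and e: "(e::real) > 0"
      obtain d where d: "d > 0" "\<forall>v'\<in>{0..T}. \<bar>v' - v\<bar> < d \<longrightarrow> E (\<lambda>w. \<bar>Ybar v' w - Ybar v w\<bar>) < e / 2"
        using Ybar_c[rule_format, OF v, of "e / 2"] e by auto
      show "\<exists>d>0. \<forall>v'\<in>{0..T}. \<bar>v' - v\<bar> < d \<longrightarrow> E (\<lambda>w. \<bar>Z v' w - Z v w\<bar>) < e"
      proof (intro exI[of _ d] conjI ballI impI)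
        show "d > 0" by (rule d(1))
        fix v' assume v': "v' \<in> {0..T}" and dv: "\<bar>v' - v\<bar> < d"
        have D: "(\<lambda>w. Ybar v' w - Ybar v w) \<in> H" using Ybar_H v v' by blast
        have "E (\<lambda>w. \<bar>Z v' w - Z v w\<bar>) = E (\<lambda>w. \<bar>(Ybar v' w - Ybar v w) + (aY v - aY v')\<bar>)"
          unfolding Z_def by (simp add: algebra_simps)
        also have "\<dots> \<le> E (\<lambda>w. \<bar>Ybar v' w - Ybar v w\<bar>) + \<bar>aY v - aY v'\<bar>"
          by (rule E_abs_shift[OF D])
        also have "\<bar>aY v - aY v'\<bar> \<le> E (\<lambda>w. \<bar>Ybar v' w - Ybar v w\<bar>)"
          using aY_diff[OF v v'] by (simp add: abs_minus_commute)
        finally show "E (\<lambda>w. \<bar>Z v' w - Z v w\<bar>) < e" using d v' dv by force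
      qed
    qed
  qed
  moreover have "(\<lambda>v. E (\<lambda>w. hbar v w (Z v w))) = (\<lambda>t. Hb t x (Ybar t))"
    unfolding Z_def Hbar_def aY_def by simp
  ultimately show ?thesis by metis
qed

lemma K_cont:
  assumes cc: "continuous_on {0..T} c"
  shows "continuous_on {0..T} (\<lambda>t. Hinv E hbar t (Ybar t) (c t))"
  unfolding continuous_on_iff
proof (intro ballI allI impI)
  fix s e assume s: "s \<in> {0..T}" and e: "(e::real) > 0"
  define K where "K t = Hinv E hbar t (Ybar t) (c t)" for t
  have KE: "t \<in> {0..T} \<Longrightarrow> Hb t (K t) (Ybar t) = c t" for t unfolding K_def by (rule Hinv_Y)
  have e2: "c_lo * e / 2 > 0" using e h_lip by simp
  obtain d1 where d1: "d1 > 0" "\<forall>t\<in>{0..T}. dist t s < d1 \<longrightarrow> dist (c t) (c s) < c_lo * e / 2"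
    using cc s e2 unfolding continuous_on_iff by meson
  obtain d2 where d2: "d2 > 0" "\<forall>t\<in>{0..T}. dist t s < d2 \<longrightarrow> dist (Hb t (K s) (Ybar t)) (Hb s (K s) (Ybar s)) < c_lo * e / 2"
    using gg_cont[of "K s"] s e2 unfolding continuous_on_iff by meson
  show "\<exists>d>0. \<forall>t\<in>{0..T}. dist t s < d \<longrightarrow> dist (Hinv E hbar t (Ybar t) (c t)) (Hinv E hbar s (Ybar s) (c s)) < e"
  proof (intro exI[of _ "min d1 d2"] conjI ballI impI)
    show "min d1 d2 > 0" using d1 d2 by simp
    fix t assume t: "t \<in> {0..T}" and dt: "dist t s < min d1 d2"
    have "c_lo * \<bar>K t - K s\<bar> \<le> \<bar>Hb t (K t) (Ybar t) - Hb t (K s) (Ybar t)\<bar>"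
      by (rule Hb_lower_abs[OF t Ybar_H[OF t]])
    also have "\<dots> = \<bar>(c t - c s) + (Hb s (K s) (Ybar s) - Hb t (K s) (Ybar t))\<bar>"
      using KE[OF t] KE[OF s] by simp
    also have "\<dots> < c_lo * e / 2 + c_lo * e / 2"
    proof -
      have "\<bar>c t - c s\<bar> < c_lo * e / 2" using d1 t dt by (auto simp: dist_real_def)
      moreover have "\<bar>Hb s (K s) (Ybar s) - Hb t (K s) (Ybar t)\<bar> < c_lo * e / 2"
        using d2 t dt by (auto simp: dist_real_def abs_minus_commute)
      ultimately show ?thesis using abs_triangle_ineq[of "c t - c s" "Hb s (K s) (Ybar s) - Hb t (K s) (Ybar t)"] by linarith
    qed
    also have "\<dots> = c_lo * e" by simp
    finally have "\<bar>K t - K s\<bar> < e" using h_lip(1) by simp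
    then show "dist (Hinv E hbar t (Ybar t) (c t)) (Hinv E hbar s (Ybar s) (c s)) < e"
      unfolding K_def by (simp add: dist_real_def)
  qed
qed

lemma Lb_cont: "continuous_on {0..T} Lb"
  using K_cont[OF l_cont] unfolding Lb_def Lbar_def .
lemma Ub_cont: "continuous_on {0..T} Ub"
  using K_cont[OF u_cont] unfolding Ub_def Ubar_def .

definition gap0 where "gap0 = (INF t\<in>{0..T}. u t - l t)"

lemma gap_le: "t \<in> {0..T} \<Longrightarrow> gap0 \<le> u t - l t"
proof -
  assume t: "t \<in> {0..T}"
  obtain Bl where Bl: "\<forall>x\<in>l ` {0..T}. norm x \<le> Bl" using l_bdd bounded_iff by blast
  obtain Bu where Bu: "\<forall>x\<in>u ` {0..T}. norm x \<le> Bu" using u_bdd bounded_iff by blast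
  have "bdd_below ((\<lambda>t. u t - l t) ` {0..T})"
    unfolding bdd_below_def
  proof (intro exI[of _ "- Bu - Bl"] ballI)
    fix x assume "x \<in> (\<lambda>t. u t - l t) ` {0..T}"
    then obtain s where s: "s \<in> {0..T}" "x = u s - l s" by blast
    have "\<bar>u s\<bar> \<le> Bu" "\<bar>l s\<bar> \<le> Bl" using Bl Bu s by auto
    then show "- Bu - Bl \<le> x" using s by linarith
  qed
  then show ?thesis unfolding gap0_def by (rule cINF_lower) (rule t)
qed

lemma UL_gap: assumes t: "t \<in> {0..T}" shows "Lb t + gap0 / c_up \<le> Ub t"
proof -
  have g: "gap0 > 0" using gap unfolding gap0_def .
  have cu: "c_up > 0" using h_lip by simp
  have "l t < u t" using gap_le[OF t] g by simp
  then have LU: "Lb t \<le> Ub t" using Lb_eq[OF t] Ub_eq[OF t] Hb_le_iff[OF t Ybar_H[OF t], of "Lb t" "Ub t"] by simp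
  have "u t - l t \<le> c_up * (Ub t - Lb t)"
    using Hb_inc(2)[OF t Ybar_H[OF t] LU] Lb_eq[OF t] Ub_eq[OF t] by simp
  then have "gap0 \<le> c_up * (Ub t - Lb t)" using gap_le[OF t] by simp
  then show ?thesis using cu by (simp add: field_simps)
qed

lemma endT: "Lb T \<le> aY T" "aY T \<le> Ub T"
proof -
  have TT: "T \<in> {0..T}" using T_pos by simp
  have "E (\<lambda>w. hbar T w (Ybar T w + 0)) = Hb T (aY T + 0) (Ybar T)" by (rule shift[OF TT])
  then have eq: "E (\<lambda>w. hbar T w (Ybar T w)) = Hb T (aY T) (Ybar T)" by simp
  show "Lb T \<le> aY T" using term_cond(1) eq l_le_iff[OF TT] by simp
  show "aY T \<le> Ub T" using term_cond(2) eq u_ge_iff[OF TT] by simp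
qed

end


lemma rs_negf:
  assumes "has_rs_integral f R s t I"
  shows "has_rs_integral (\<lambda>v. - f v) R s t (- I)"
  using assms unfolding has_rs_integral_def by (simp add: sum_negf abs_minus_commute)

lemma bv_neg: "bounded_variation_on R a b \<Longrightarrow> bounded_variation_on (\<lambda>v. - R v) a b"
  unfolding bounded_variation_on_def by (simp add: abs_minus_commute)

context bsp_setting
begin

definition psi where "psi t = aY t - Lb t"
definition theta where "theta t = aY t - Ub t"

lemma psi_cont: "continuous_on {0..T} psi"
  unfolding psi_def by (intro continuous_intros aY_cont Lb_cont)
lemma theta_cont: "continuous_on {0..T} theta"
  unfolding theta_def by (intro continuous_intros aY_cont Ub_cont)
lemma theta_psi_gap: "t \<in> {0..T} \<Longrightarrow> theta t + gap0 / c_up \<le> psi t"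
  using UL_gap unfolding psi_def theta_def by force
lemma gap_pos: "gap0 / c_up > 0"
  using gap h_lip unfolding gap0_def by simp

lemma l_less_iff: assumes t: "t \<in> {0..T}" shows "l t < Hb t x (Ybar t) \<longleftrightarrow> Lb t < x"
  using l_le_iff[OF t, of x] l_eq_iff[OF t, of x] by auto
lemma u_less_iff: assumes t: "t \<in> {0..T}" shows "Hb t x (Ybar t) < u t \<longleftrightarrow> x < Ub t"
  using u_ge_iff[OF t, of x] u_eq_iff[OF t, of x] by auto

lemma phi_cont:
  assumes "C1G T LG E Y'"
  shows "continuous_on {0..T} (\<lambda>v. E (\<lambda>w. hbar v w (Y' v w)))"
proof (rule cont_Eh)
  show "\<forall>v\<in>{0..T}. Y' v \<in> H" using assms LG_sub unfolding C1G_def by blast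
  show "\<forall>v\<in>{0..T}. \<forall>e>0. \<exists>d>0. \<forall>v'\<in>{0..T}. \<bar>v' - v\<bar> < d \<longrightarrow> E (\<lambda>w. \<bar>Y' v' w - Y' v w\<bar>) < e"
    using assms unfolding C1G_def by blast
qed

lemma phi_eq:
  assumes t: "t \<in> {0..T}" and Y: "\<forall>w. Y' t w = Ybar t w + R' T - R' t"
  shows "E (\<lambda>w. hbar t w (Y' t w)) = Hb t (aY t + (R' T - R' t)) (Ybar t)"
proof -
  have "Y' t w = Ybar t w + (R' T - R' t)" for w using Y by (simp add: algebra_simps)
  then have "(\<lambda>w. hbar t w (Y' t w)) = (\<lambda>w. hbar t w (Ybar t w + (R' T - R' t)))"
    by simp
  then show ?thesis using shift[OF t] by simp
qed

lemma sol_formula: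
  assumes sol: "BSP T LG E hbar l u Ybar Y' R'" and t: "t \<in> {0..T}"
  shows "R' T - R' t =
              - max (min (max (E (Ybar T) - Ubar E hbar u T (Ybar T)) 0)
                         (INF v\<in>{t..T}. E (Ybar v) - Lbar E hbar l v (Ybar v)))
                    (SUP s\<in>{t..T}. min (E (Ybar s) - Ubar E hbar u s (Ybar s))
                                       (INF v\<in>{t..s}. E (Ybar v) - Lbar E hbar l v (Ybar v)))"
proof -
  have C: "C1G T LG E Y'" and CT: "CTB T R'"
    and i: "\<forall>t\<in>{0..T}. \<forall>w. Y' t w = Ybar t w + R' T - R' t"
    and ii: "\<forall>t\<in>{0..T}. l t \<le> E (\<lambda>w. hbar t w (Y' t w)) \<and> E (\<lambda>w. hbar t w (Y' t w)) \<le> u t"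
    and iii: "\<forall>s t. 0 \<le> s \<and> s \<le> t \<and> t \<le> T \<longrightarrow>
        (\<exists>I. has_rs_integral (\<lambda>v. E (\<lambda>w. hbar v w (Y' v w)) - l v) R' s t I \<and> I \<le> 0) \<and>
        (\<exists>I. has_rs_integral (\<lambda>v. E (\<lambda>w. hbar v w (Y' v w)) - u v) R' s t I \<and> I \<le> 0)"
    using sol unfolding BSP_def by auto
  define Lam where "Lam v = R' v - R' T" for v
  define ph where "ph v = E (\<lambda>w. hbar v w (Y' v w))" for v
  have phE: "ph v = Hb v (aY v - Lam v) (Ybar v)" if v: "v \<in> {0..T}" for v
  proof -
    have "ph v = Hb v (aY v + (R' T - R' v)) (Ybar v)" unfolding ph_def by (rule phi_eq[OF v]) (use i v in blast)
    moreover have "aY v + (R' T - R' v) = aY v - Lam v" unfolding Lam_def by simp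
    ultimately show ?thesis by simp
  qed
  have phc: "continuous_on {0..T} ph" unfolding ph_def by (rule phi_cont[OF C])
  have cR: "continuous_on {0..T} R'" and bvR: "bounded_variation_on R' 0 T"
    using CT unfolding CTB_def by auto
  have cL: "continuous_on {0..T} Lam" unfolding Lam_def by (intro continuous_intros cR)
  have bnd: "\<forall>v\<in>{0..T}. theta v \<le> Lam v \<and> Lam v \<le> psi v"
  proof
    fix v assume v: "v \<in> {0..T}"
    have "l v \<le> ph v" "ph v \<le> u v" using ii v unfolding ph_def by auto
    then have "Lb v \<le> aY v - Lam v" "aY v - Lam v \<le> Ub v"
      using l_le_iff[OF v] u_ge_iff[OF v] phE[OF v] by auto
    then show "theta v \<le> Lam v \<and> Lam v \<le> psi v" unfolding theta_def psi_def by auto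
  qed
  have LT: "Lam T = 0" unfolding Lam_def by simp
  have thT: "theta T \<le> 0" using endT unfolding theta_def by simp
  have HLo: "\<forall>p q. 0 \<le> p \<and> p \<le> q \<and> q \<le> T \<and> (\<forall>v\<in>{p..q}. Lam v < psi v) \<longrightarrow> Lam q \<le> Lam p"
  proof (intro allI impI)
    fix p q assume A: "0 \<le> p \<and> p \<le> q \<and> q \<le> T \<and> (\<forall>v\<in>{p..q}. Lam v < psi v)"
    define f where "f v = ph v - l v" for v
    have sub: "{p..q} \<subseteq> {0..T}" using A by auto
    have fc: "continuous_on {p..q} f" unfolding f_def
      by (intro continuous_intros continuous_on_subset[OF phc sub] continuous_on_subset[OF l_cont sub])
    have fpos: "f v > 0" if v: "v \<in> {p..q}" for v
    proof -
      have v0: "v \<in> {0..T}" using sub v by auto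
      have "Lam v < psi v" using A v by blast
      then have "Lb v < aY v - Lam v" unfolding psi_def by simp
      then have "l v < ph v" using l_less_iff[OF v0] phE[OF v0] by simp
      then show ?thesis unfolding f_def by simp
    qed
    obtain x0 where x0: "x0 \<in> {p..q}" "\<forall>y\<in>{p..q}. f x0 \<le> f y"
      using continuous_attains_inf[OF compact_Icc _ fc] A by auto
    have "R' q \<le> R' p"
    proof (rule rs_mono_neg[of p q T f "f x0" R'])
      show "0 \<le> p" "p \<le> q" "q \<le> T" using A by auto
      show "continuous_on {p..q} f" by (rule fc)
      show "f x0 > 0" by (rule fpos[OF x0(1)])
      show "\<forall>v\<in>{p..q}. f x0 \<le> f v" by (rule x0(2))
      show "bounded_variation_on R' 0 T" by (rule bvR)
      show "\<forall>s t. p \<le> s \<and> s \<le> t \<and> t \<le> q \<longrightarrow> (\<exists>I. has_rs_integral f R' s t I \<and> I \<le> 0)"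
        using iii A unfolding f_def ph_def by auto
    qed
    then show "Lam q \<le> Lam p" unfolding Lam_def by simp
  qed
  have HUp: "\<forall>p q. 0 \<le> p \<and> p \<le> q \<and> q \<le> T \<and> (\<forall>v\<in>{p..q}. theta v < Lam v) \<longrightarrow> Lam p \<le> Lam q"
  proof (intro allI impI)
    fix p q assume A: "0 \<le> p \<and> p \<le> q \<and> q \<le> T \<and> (\<forall>v\<in>{p..q}. theta v < Lam v)"
    define f where "f v = - (ph v - u v)" for v
    have sub: "{p..q} \<subseteq> {0..T}" using A by auto
    have fc: "continuous_on {p..q} f" unfolding f_def
      by (intro continuous_intros continuous_on_subset[OF phc sub] continuous_on_subset[OF u_cont sub])
    have fpos: "f v > 0" if v: "v \<in> {p..q}" for v
    proof -
      have v0: "v \<in> {0..T}" using sub v by auto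
      have "theta v < Lam v" using A v by blast
      then have "aY v - Lam v < Ub v" unfolding theta_def by simp
      then have "ph v < u v" using u_less_iff[OF v0] phE[OF v0] by simp
      then show ?thesis unfolding f_def by simp
    qed
    obtain x0 where x0: "x0 \<in> {p..q}" "\<forall>y\<in>{p..q}. f x0 \<le> f y"
      using continuous_attains_inf[OF compact_Icc _ fc] A by auto
    have "(\<lambda>v. - R' v) q \<le> (\<lambda>v. - R' v) p"
    proof (rule rs_mono_neg[of p q T f "f x0" "\<lambda>v. - R' v"])
      show "0 \<le> p" "p \<le> q" "q \<le> T" using A by auto
      show "continuous_on {p..q} f" by (rule fc)
      show "f x0 > 0" by (rule fpos[OF x0(1)])
      show "\<forall>v\<in>{p..q}. f x0 \<le> f v" by (rule x0(2))
      show "bounded_variation_on (\<lambda>v. - R' v) 0 T" by (rule bv_neg[OF bvR])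
      show "\<forall>s t. p \<le> s \<and> s \<le> t \<and> t \<le> q \<longrightarrow> (\<exists>I. has_rs_integral f (\<lambda>v. - R' v) s t I \<and> I \<le> 0)"
      proof (intro allI impI)
        fix s t assume st: "p \<le> s \<and> s \<le> t \<and> t \<le> q"
        then obtain I where I: "has_rs_integral (\<lambda>v. E (\<lambda>w. hbar v w (Y' v w)) - u v) R' s t I" "I \<le> 0"
          using iii A by (meson order.trans)
        have "has_rs_integral f (\<lambda>v. - R' v) s t I"
          using rs_neg[OF I(1)] unfolding f_def ph_def by simp
        then show "\<exists>I. has_rs_integral f (\<lambda>v. - R' v) s t I \<and> I \<le> 0" using I(2) by blast
      qed
    qed
    then show "Lam p \<le> Lam q" unfolding Lam_def by simp
  qed
  have "Lam t = max (min (max (theta T) 0) (INF v\<in>{t..T}. psi v))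
                    (SUP s\<in>{t..T}. min (theta s) (INF v\<in>{t..s}. psi v))"
    by (rule skor_formula[OF cL psi_cont theta_cont bnd LT thT HLo HUp]) (use t in auto)
  moreover have "psi = (\<lambda>v. E (Ybar v) - Lbar E hbar l v (Ybar v))"
    unfolding psi_def aY_def Lb_def by auto
  moreover have "theta = (\<lambda>v. E (Ybar v) - Ubar E hbar u v (Ybar v))"
    unfolding theta_def aY_def Ub_def by auto
  ultimately show ?thesis unfolding Lam_def by simp
qed

end


lemma bv_of_mono:
  fixes A B :: "real \<Rightarrow> real"
  assumes mA: "mono_on {0..T} A" and mB: "mono_on {0..T} B" and T0: "0 \<le> T"
    and R: "\<forall>v\<in>{0..T}. R v = A v - B v + c"
  shows "bounded_variation_on R 0 T"
  unfolding bounded_variation_on_def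
proof (intro exI[of _ "(A T - A 0) + (B T - B 0)"] allI impI)
  fix xs :: "real list" assume A: "sorted xs \<and> set xs \<subseteq> {0..T}"
  let ?n = "length xs - 1"
  have inr: "i < length xs \<Longrightarrow> xs ! i \<in> {0..T}" for i using A by (auto simp: set_conv_nth)
  have step: "\<bar>R (xs ! Suc i) - R (xs ! i)\<bar> \<le> (A (xs ! Suc i) - A (xs ! i)) + (B (xs ! Suc i) - B (xs ! i))"
    if i: "i < ?n" for i
  proof -
    have a: "xs ! Suc i \<in> {0..T}" "xs ! i \<in> {0..T}" using inr i by auto
    have le: "xs ! i \<le> xs ! Suc i" using A i by (auto intro: sorted_nth_mono)
    have "A (xs ! i) \<le> A (xs ! Suc i)" "B (xs ! i) \<le> B (xs ! Suc i)"
      using mA mB a le by (auto simp: mono_on_def)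
    then show ?thesis using R a by (simp add: abs_le_iff)
  qed
  have m0: "0 \<le> (A T - A 0) + (B T - B 0)"
  proof -
    have "A 0 \<le> A T" "B 0 \<le> B T" using mA mB T0 by (auto simp: mono_on_def)
    then show ?thesis by simp
  qed
  show "(\<Sum>i<?n. \<bar>R (xs ! Suc i) - R (xs ! i)\<bar>) \<le> (A T - A 0) + (B T - B 0)"
  proof (cases "xs = []")
    case True then show ?thesis using m0 by simp
  next
    case False
    have "(\<Sum>i<?n. \<bar>R (xs ! Suc i) - R (xs ! i)\<bar>)
        \<le> (\<Sum>i<?n. (A (xs ! Suc i) - A (xs ! i)) + (B (xs ! Suc i) - B (xs ! i)))"
      by (intro sum_mono step) simp
    also have "\<dots> = (A (xs ! ?n) - A (xs ! 0)) + (B (xs ! ?n) - B (xs ! 0))"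
      by (simp add: sum.distrib sum_lessThan_telescope[of "\<lambda>i. A (xs ! i)"] sum_lessThan_telescope[of "\<lambda>i. B (xs ! i)"])
    also have "\<dots> \<le> (A T - A 0) + (B T - B 0)"
    proof -
      have a: "xs ! ?n \<in> {0..T}" "xs ! 0 \<in> {0..T}" using inr False by auto
      have "A (xs ! ?n) \<le> A T" "B (xs ! ?n) \<le> B T" "A 0 \<le> A (xs ! 0)" "B 0 \<le> B (xs ! 0)"
        using mA mB a T0 by (auto simp: mono_on_def)
      then show ?thesis by simp
    qed
    finally show ?thesis .
  qed
qed

context bsp_setting
begin

lemma existence: "\<exists>Y R. BSP T LG E hbar l u Ybar Y R"
proof -
  have T0: "0 \<le> T" using T_pos by simp
  have gapc: "\<forall>v\<in>{0..T}. theta v + gap0 / c_up \<le> psi v" using theta_psi_gap by blast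
  have e1: "theta T \<le> 0" "0 \<le> psi T" using endT unfolding theta_def psi_def by auto
  obtain Lam A B where D: "DSol psi theta T 0 Lam A B"
    using skor_exists[OF T0 psi_cont theta_cont gap_pos gapc e1] by blast
  have cL: "continuous_on {0..T} Lam" and cA: "continuous_on {0..T} A" and cB: "continuous_on {0..T} B"
    and mA: "mono_on {0..T} A" and mB: "mono_on {0..T} B"
    and bnd: "\<forall>v\<in>{0..T}. theta v \<le> Lam v \<and> Lam v \<le> psi v" and LT: "Lam T = 0"
    and LAB: "\<forall>v\<in>{0..T}. Lam v = A v - B v"
    and fA: "\<forall>x y. 0 \<le> x \<and> x \<le> y \<and> y \<le> T \<and> A x < A y \<longrightarrow> (\<exists>w\<in>{x..y}. Lam w = psi w)"
    and fB: "\<forall>x y. 0 \<le> x \<and> x \<le> y \<and> y \<le> T \<and> B x < B y \<longrightarrow> (\<exists>w\<in>{x..y}. Lam w = theta w)"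
    using D unfolding DSol_def by auto
  define R where "R v = Lam v - Lam 0" for v
  define Y where "Y v = (\<lambda>w. Ybar v w + R T - R v)" for v
  have RT: "R T - R t = - Lam t" for t unfolding R_def using LT by simp
  have cR: "continuous_on {0..T} R" unfolding R_def by (intro continuous_intros cL)
  have YH: "Y v \<in> LG v" if v: "v \<in> {0..T}" for v
  proof -
    have S: "sublinear_expectation (LG v) E" by (rule SE_v[OF v])
    have y: "Ybar v \<in> LG v" using Ybar_C1G v unfolding C1G_def by blast
    have c: "(\<lambda>_. R T - R v) \<in> LG v" using S unfolding sublinear_expectation_def by blast
    have add: "\<forall>X\<in>LG v. \<forall>Y\<in>LG v. (\<lambda>w. X w + Y w) \<in> LG v" using S unfolding sublinear_expectation_def by blast
    have "(\<lambda>w. Ybar v w + (R T - R v)) \<in> LG v" using add[rule_format, OF y c] .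
    then show ?thesis unfolding Y_def by (simp add: algebra_simps)
  qed
  have CY: "C1G T LG E Y"
    unfolding C1G_def
  proof (intro conjI ballI allI impI)
    fix v assume "v \<in> {0..T}" then show "Y v \<in> LG v" by (rule YH)
  next
    fix v e assume v: "v \<in> {0..T}" and e: "(e::real) > 0"
    obtain d1 where d1: "d1 > 0" "\<forall>v'\<in>{0..T}. \<bar>v' - v\<bar> < d1 \<longrightarrow> E (\<lambda>w. \<bar>Ybar v' w - Ybar v w\<bar>) < e / 2"
      using Ybar_c[rule_format, OF v, of "e / 2"] e by auto
    obtain d2 where d2: "d2 > 0" "\<forall>v'\<in>{0..T}. dist v' v < d2 \<longrightarrow> dist (R v') (R v) < e / 2"
      using cR v e unfolding continuous_on_iff by (meson half_gt_zero)
    show "\<exists>\<delta>>0. \<forall>v'\<in>{0..T}. \<bar>v' - v\<bar> < \<delta> \<longrightarrow> E (\<lambda>w. \<bar>Y v' w - Y v w\<bar>) < e"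
    proof (intro exI[of _ "min d1 d2"] conjI ballI impI)
      show "min d1 d2 > 0" using d1 d2 by simp
      fix v' assume v': "v' \<in> {0..T}" and dv: "\<bar>v' - v\<bar> < min d1 d2"
      have D: "(\<lambda>w. Ybar v' w - Ybar v w) \<in> H" using Ybar_H v v' by blast
      have "E (\<lambda>w. \<bar>Y v' w - Y v w\<bar>) = E (\<lambda>w. \<bar>(Ybar v' w - Ybar v w) + (R v - R v')\<bar>)"
        unfolding Y_def by (simp add: algebra_simps)
      also have "\<dots> \<le> E (\<lambda>w. \<bar>Ybar v' w - Ybar v w\<bar>) + \<bar>R v - R v'\<bar>" by (rule E_abs_shift[OF D])
      also have "\<dots> < e / 2 + e / 2"
      proof -
        have "E (\<lambda>w. \<bar>Ybar v' w - Ybar v w\<bar>) < e / 2" using d1 v' dv by auto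
        moreover have "\<bar>R v - R v'\<bar> < e / 2" using d2 v' dv by (auto simp: dist_real_def abs_minus_commute)
        ultimately show ?thesis by simp
      qed
      finally show "E (\<lambda>w. \<bar>Y v' w - Y v w\<bar>) < e" by simp
    qed
  qed
  have bv: "bounded_variation_on R 0 T"
    by (rule bv_of_mono[OF mA mB T0, of R "- Lam 0"]) (use LAB in \<open>auto simp: R_def\<close>)
  have CT: "CTB T R" unfolding CTB_def using cR bv by (simp add: R_def)
  define ph where "ph v = E (\<lambda>w. hbar v w (Y v w))" for v
  have phE: "ph v = Hb v (aY v - Lam v) (Ybar v)" if v: "v \<in> {0..T}" for v
  proof -
    have "ph v = Hb v (aY v + (R T - R v)) (Ybar v)" unfolding ph_def by (rule phi_eq[OF v]) (simp add: Y_def)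
    then show ?thesis using RT by simp
  qed
  have phc: "continuous_on {0..T} ph" unfolding ph_def by (rule phi_cont[OF CY])
  have ii: "l v \<le> ph v \<and> ph v \<le> u v" if v: "v \<in> {0..T}" for v
  proof -
    have "theta v \<le> Lam v \<and> Lam v \<le> psi v" using bnd v by blast
    then have "Lb v \<le> aY v - Lam v" "aY v - Lam v \<le> Ub v" unfolding psi_def theta_def by auto
    then show ?thesis using l_le_iff[OF v] u_ge_iff[OF v] phE[OF v] by simp
  qed
  have iii: "(\<exists>I. has_rs_integral (\<lambda>v. ph v - l v) R s t I \<and> I \<le> 0) \<and>
        (\<exists>I. has_rs_integral (\<lambda>v. ph v - u v) R s t I \<and> I \<le> 0)"
    if st: "0 \<le> s" "s \<le> t" "t \<le> T" for s t
  proof -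
    have sub: "{s..t} \<subseteq> {0..T}" using st by auto
    have mA': "mono_on {s..t} A" and mB': "mono_on {s..t} B" using mA mB sub by (auto intro: mono_on_subset)
    have cA': "continuous_on {s..t} A" and cB': "continuous_on {s..t} B" using cA cB sub by (auto intro: continuous_on_subset)
    have Rcong: "\<forall>x\<in>{s..t}. A x - B x = R x + Lam 0" using LAB sub unfolding R_def by auto
    have flatA: "\<forall>x y. s \<le> x \<and> x \<le> y \<and> y \<le> t \<and> A x < A y \<longrightarrow> (\<exists>w\<in>{x..y}. Lam w = psi w)"
      using fA st by (meson order.trans)
    have flatB: "\<forall>x y. s \<le> x \<and> x \<le> y \<and> y \<le> t \<and> B x < B y \<longrightarrow> (\<exists>w\<in>{x..y}. Lam w = theta w)"
      using fB st by (meson order.trans)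
    have psiL: "ph w = l w" if "w \<in> {0..T}" "Lam w = psi w" for w
      using phE[OF that(1)] l_eq_iff[OF that(1)] that(2) unfolding psi_def by simp
    have thU: "ph w = u w" if "w \<in> {0..T}" "Lam w = theta w" for w
      using phE[OF that(1)] u_eq_iff[OF that(1)] that(2) unfolding theta_def by simp
    have c1: "continuous_on {s..t} (\<lambda>v. ph v - l v)"
      by (intro continuous_intros continuous_on_subset[OF phc sub] continuous_on_subset[OF l_cont sub])
    have c2: "continuous_on {s..t} (\<lambda>v. ph v - u v)"
      by (intro continuous_intros continuous_on_subset[OF phc sub] continuous_on_subset[OF u_cont sub])
    obtain IA where IA: "has_rs_integral (\<lambda>v. ph v - l v) A s t IA" using rs_exists_mono[OF c1 cA' mA' st(2)] by blast
    obtain IB where IB: "has_rs_integral (\<lambda>v. ph v - l v) B s t IB" using rs_exists_mono[OF c1 cB' mB' st(2)] by blast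
    obtain JA where JA: "has_rs_integral (\<lambda>v. ph v - u v) A s t JA" using rs_exists_mono[OF c2 cA' mA' st(2)] by blast
    obtain JB where JB: "has_rs_integral (\<lambda>v. ph v - u v) B s t JB" using rs_exists_mono[OF c2 cB' mB' st(2)] by blast
    have IA0: "IA = 0"
    proof (rule rs_zero_flat[OF IA st(2) mA'], intro allI impI)
      fix x y assume xy: "s \<le> x \<and> x \<le> y \<and> y \<le> t \<and> A x < A y"
      then obtain w where w: "w \<in> {x..y}" "Lam w = psi w" using flatA by blast
      then have "w \<in> {0..T}" using xy st by auto
      then have "ph w = l w" using w psiL by blast
      then show "\<exists>w\<in>{x..y}. ph w - l w = 0" using w(1) by auto
    qed
    have IB0: "0 \<le> IB" by (rule rs_nonneg[OF IB st(2) mB']) (use ii sub in force)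
    have JB0: "JB = 0"
    proof (rule rs_zero_flat[OF JB st(2) mB'], intro allI impI)
      fix x y assume xy: "s \<le> x \<and> x \<le> y \<and> y \<le> t \<and> B x < B y"
      then obtain w where w: "w \<in> {x..y}" "Lam w = theta w" using flatB by blast
      then have "w \<in> {0..T}" using xy st by auto
      then have "ph w = u w" using w thU by blast
      then show "\<exists>w\<in>{x..y}. ph w - u w = 0" using w(1) by auto
    qed
    have JA0: "0 \<le> - JA" by (rule rs_nonneg[OF rs_negf[OF JA] st(2) mA']) (use ii sub in force)
    have "has_rs_integral (\<lambda>v. ph v - l v) R s t (IA - IB)"
      by (rule rs_cong[OF _ Rcong rs_diff[OF IA IB]]) simp
    moreover have "has_rs_integral (\<lambda>v. ph v - u v) R s t (JA - JB)"
      by (rule rs_cong[OF _ Rcong rs_diff[OF JA JB]]) simp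
    ultimately show ?thesis using IA0 IB0 JA0 JB0 by auto
  qed
  have "BSP T LG E hbar l u Ybar Y R"
    unfolding BSP_def
  proof (intro conjI)
    show "C1G T LG E Y" by (rule CY)
    show "CTB T R" by (rule CT)
    show "\<forall>t\<in>{0..T}. \<forall>w. Y t w = Ybar t w + R T - R t" unfolding Y_def by simp
    show "\<forall>t\<in>{0..T}. l t \<le> E (\<lambda>w. hbar t w (Y t w)) \<and> E (\<lambda>w. hbar t w (Y t w)) \<le> u t"
      using ii unfolding ph_def by blast
    show "\<forall>s t. 0 \<le> s \<and> s \<le> t \<and> t \<le> T \<longrightarrow>
        (\<exists>I. has_rs_integral (\<lambda>v. E (\<lambda>w. hbar v w (Y v w)) - l v) R s t I \<and> I \<le> 0) \<and>
        (\<exists>I. has_rs_integral (\<lambda>v. E (\<lambda>w. hbar v w (Y v w)) - u v) R s t I \<and> I \<le> 0)"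
      using iii unfolding ph_def by blast
  qed
  then show ?thesis by blast
qed

lemma main_result:
  "\<exists>Y R. BSP T LG E hbar l u Ybar Y R \<and>
           (\<forall>Y' R'. BSP T LG E hbar l u Ybar Y' R' \<longrightarrow>
                (\<forall>t\<in>{0..T}. Y' t = Y t \<and> R' t = R t)) \<and>
           (\<forall>t\<in>{0..T}. R T - R t =
              - max (min (max (E (Ybar T) - Ubar E hbar u T (Ybar T)) 0)
                         (INF v\<in>{t..T}. E (Ybar v) - Lbar E hbar l v (Ybar v)))
                    (SUP s\<in>{t..T}. min (E (Ybar s) - Ubar E hbar u s (Ybar s))
                                       (INF v\<in>{t..s}. E (Ybar v) - Lbar E hbar l v (Ybar v))))"
proof -
  obtain Y R where sol: "BSP T LG E hbar l u Ybar Y R" using existence by blast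
  have T0: "0 \<in> {0..T}" using T_pos by simp
  have uniq: "\<forall>t\<in>{0..T}. Y' t = Y t \<and> R' t = R t" if sol': "BSP T LG E hbar l u Ybar Y' R'" for Y' R'
  proof
    fix t assume t: "t \<in> {0..T}"
    have eqd: "R' T - R' v = R T - R v" if "v \<in> {0..T}" for v
      using sol_formula[OF sol that] sol_formula[OF sol' that] by simp
    have "R' 0 = 0" "R 0 = 0" using sol sol' unfolding BSP_def CTB_def by auto
    then have RT: "R' T = R T" using eqd[OF T0] by simp
    then have Rt: "R' t = R t" using eqd[OF t] by simp
    have "Y' t w = Y t w" for w
      using sol sol' t RT Rt unfolding BSP_def by auto
    then show "Y' t = Y t \<and> R' t = R t" using Rt by auto
  qed
  show ?thesis using sol uniq sol_formula[OF sol] by blast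
qed

end


theorem theorem3p7:
  fixes T :: real
    and LG :: "real \<Rightarrow> ('w \<Rightarrow> real) set"
    and E :: "('w \<Rightarrow> real) \<Rightarrow> real"
    and hbar :: "real \<Rightarrow> 'w \<Rightarrow> real \<Rightarrow> real"
    and l u :: "real \<Rightarrow> real"
    and Ybar :: "real \<Rightarrow> 'w \<Rightarrow> real"
    and C_h c_lo c_up :: real
  assumes T_pos: "0 < T"
    and frame: "G_framework T LG E"
    and l_cont: "continuous_on {0..T} l" and l_bdd: "bounded (l ` {0..T})"
    and u_cont: "continuous_on {0..T} u" and u_bdd: "bounded (u ` {0..T})"
    and gap: "0 < (INF t\<in>{0..T}. u t - l t)"
    and h_unif: "\<forall>\<epsilon>>0. \<exists>\<delta>>0. \<forall>w t t' y y'. t \<in> {0..T} \<and> t' \<in> {0..T} \<and>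
                   \<bar>t - t'\<bar> < \<delta> \<and> \<bar>y - y'\<bar> < \<delta> \<longrightarrow> \<bar>hbar t w y - hbar t' w y'\<bar> < \<epsilon>"
    and h_mono: "\<forall>t\<in>{0..T}. \<forall>w. strict_mono (hbar t w)"
    and h_LG: "\<forall>t\<in>{0..T}. \<forall>y. (\<lambda>w. hbar t w y) \<in> LG T"
    and h_growth: "0 < C_h" "\<forall>t\<in>{0..T}. \<forall>w y. \<bar>hbar t w y\<bar> \<le> C_h * (1 + \<bar>y\<bar>)"
    and h_lip: "0 < c_lo" "c_lo \<le> c_up"
      "\<forall>t\<in>{0..T}. \<forall>w y y'. c_lo * \<bar>y - y'\<bar> \<le> \<bar>hbar t w y - hbar t w y'\<bar> \<and>
                            \<bar>hbar t w y - hbar t w y'\<bar> \<le> c_up * \<bar>y - y'\<bar>"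
    and Ybar_C1G: "C1G T LG E Ybar"
    and term_cond: "l T \<le> E (\<lambda>w. hbar T w (Ybar T w))" "E (\<lambda>w. hbar T w (Ybar T w)) \<le> u T"
  shows "\<exists>Y R. BSP T LG E hbar l u Ybar Y R \<and>
           (\<forall>Y' R'. BSP T LG E hbar l u Ybar Y' R' \<longrightarrow>
                (\<forall>t\<in>{0..T}. Y' t = Y t \<and> R' t = R t)) \<and>
           (\<forall>t\<in>{0..T}. R T - R t =
              - max (min (max (E (Ybar T) - Ubar E hbar u T (Ybar T)) 0)
                         (INF v\<in>{t..T}. E (Ybar v) - Lbar E hbar l v (Ybar v)))
                    (SUP s\<in>{t..T}. min (E (Ybar s) - Ubar E hbar u s (Ybar s))
                                       (INF v\<in>{t..s}. E (Ybar v) - Lbar E hbar l v (Ybar v))))"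
proof -
  interpret bsp_setting T LG E hbar l u Ybar C_h c_lo c_up
    by (intro bsp_setting.intro) (use assms in blast)+
  show ?thesis by (rule main_result)
qed

end
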